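(* For every $k\in\{1,\dots,m\}$ and every configuration $\tau$ on $V\setminus B_k$, $\lambda(\boldsymbol{I}_k^\tau)\ge\frac17 e^{-2\beta dL^d}$.
   Context: $V\subset\mathbb{Z}^d$ a finite $d$-dimensional cube, $G=(V,E)$; Potts measure with free boundary $\pi(\sigma)\propto\exp(\beta\,\#\{(u,v)\in E:\sigma(u)=\sigma(v)\})$ on $\{1,\dots,q\}^V$, $\beta>0$, $p=1-e^{-\beta}$. Tilings $\mathcal{D}=\{B_1,\dots,B_m\}$: for odd $L$ and $x\in\{0,\dots,L+2\}^d$, $B_x=V\cap\bigcup_{h\in\mathbb{Z}^d}\{y:\|y-(x+(L+3)h)\|_\infty\le(L-1)/2\}$ (a union of cubes of volume at most $L^d$ at mutual distance 4). $\boldsymbol{I}_k^\tau$: Markov chain on configurations of $B_k$ which, from $\sigma_t$, includes each edge of $E$ that is monochromatic under $\sigma_t\cup\tau$ independently with probability $p$, gives each vertex of $B_k$ that is isolated in the resulting edge set an independent uniform spin in $\{1,\dots,q\}$, and discards the edges; it is reversible w.r.t. $\pi(\cdot\mid\tau)$. $\lambda(P)=1-\max\{|\lambda_2|,|\lambda_N|\}$ for reversible $P$ with eigenvalues $1=\lambda_1\ge\dots\ge\lambda_N$. *)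

theory Defs
  imports "Jordan_Normal_Form.Char_Poly" "HOL-Library.Multiset"
begin

type_synonym vtx = "nat \<Rightarrow> int"   (* points of Z^d: coordinates i < d, zero for i >= d *)
type_synonym config = "vtx \<Rightarrow> nat"

definition cube :: "nat \<Rightarrow> vtx \<Rightarrow> nat \<Rightarrow> vtx set" where
  "cube d c n = {y. (\<forall>i<d. c i \<le> y i \<and> y i < c i + int n) \<and> (\<forall>i. d \<le> i \<longrightarrow> y i = 0)}"

definition adj :: "nat \<Rightarrow> vtx \<Rightarrow> vtx \<Rightarrow> bool" where
  "adj d u v \<longleftrightarrow> (\<Sum>i<d. \<bar>u i - v i\<bar>) = 1"

definition edges :: "nat \<Rightarrow> vtx set \<Rightarrow> vtx set set" where
  "edges d V = {{u, v} | u v. u \<in> V \<and> v \<in> V \<and> adj d u v}"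

definition block :: "nat \<Rightarrow> vtx set \<Rightarrow> nat \<Rightarrow> vtx \<Rightarrow> vtx set" where
  "block d V L x = V \<inter> (\<Union>h::vtx. {y. \<forall>i<d.
       \<bar>y i - (x i + int (L + 3) * h i)\<bar> \<le> int ((L - 1) div 2)})"

definition configs :: "vtx set \<Rightarrow> nat \<Rightarrow> config set" where
  "configs A q = {\<sigma>. (\<forall>v\<in>A. \<sigma> v \<in> {1..q}) \<and> (\<forall>v. v \<notin> A \<longrightarrow> \<sigma> v = 0)}"

definition glue :: "vtx set \<Rightarrow> config \<Rightarrow> config \<Rightarrow> config" where
  "glue B \<sigma> \<tau> = (\<lambda>v. if v \<in> B then \<sigma> v else \<tau> v)"

definition mono_edges :: "vtx set set \<Rightarrow> config \<Rightarrow> vtx set set" where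
  "mono_edges E \<eta> = {e \<in> E. \<exists>u v. e = {u, v} \<and> \<eta> u = \<eta> v}"

text \<open>Transition probability of the chain I_k^tau on configurations of B:
  choose a subset A of the monochromatic edges (each independently with prob. p),
  keep the spins of non-isolated vertices of B, resample the isolated ones uniformly.\<close>
definition I_kernel :: "nat \<Rightarrow> vtx set \<Rightarrow> nat \<Rightarrow> real \<Rightarrow> vtx set \<Rightarrow> config \<Rightarrow> config \<Rightarrow> config \<Rightarrow> real" where
  "I_kernel d V q \<beta> B \<tau> \<sigma> \<sigma>' =
     (let p = 1 - exp (- \<beta>); M = mono_edges (edges d V) (glue B \<sigma> \<tau>) in
      \<Sum>A\<in>Pow M. p ^ card A * (1 - p) ^ (card M - card A) *
        (if (\<forall>v\<in>B. v \<in> \<Union>A \<longrightarrow> \<sigma>' v = \<sigma> v)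
         then (1 / real q) ^ card {v \<in> B. v \<notin> \<Union>A} else 0))"

definition enum_states :: "'s set \<Rightarrow> nat \<Rightarrow> 's" where
  "enum_states S = (SOME f. bij_betw f {0..<card S} S)"

definition kernel_mat :: "'s set \<Rightarrow> ('s \<Rightarrow> 's \<Rightarrow> real) \<Rightarrow> real mat" where
  "kernel_mat S P = mat (card S) (card S) (\<lambda>(i, j). P (enum_states S i) (enum_states S j))"

text \<open>Eigenvalues with multiplicity, in non-increasing order lambda_1 >= ... >= lambda_N
  (for a reversible P all eigenvalues are real).\<close>
definition eigs_desc :: "real mat \<Rightarrow> real list" where
  "eigs_desc A = rev (sorted_list_of_multiset (proots (char_poly A)))"

definition spectral_gap :: "'s set \<Rightarrow> ('s \<Rightarrow> 's \<Rightarrow> real) \<Rightarrow> real" where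
  "spectral_gap S P = (let ev = eigs_desc (kernel_mat S P) in
      1 - max \<bar>ev ! 1\<bar> \<bar>last ev\<bar>)"

end

theory Submission
  imports Defs "Jordan_Normal_Form.Schur_Decomposition"
begin


interpretation of_real_poly_hom: map_poly_comm_ring_hom "of_real :: real \<Rightarrow> complex" ..

lemma real_poly_split:
  fixes p :: "real poly"
  assumes "lead_coeff p = 1"
  and "\<And>z. poly (map_poly complex_of_real p) z = 0 \<Longrightarrow> Im z = 0"
  shows "\<exists>es. p = (\<Prod>e\<leftarrow>es. [:-e,1:])"
  using assms
proof (induct "degree p" arbitrary: p)
  case 0
  then show ?case by (intro exI[of _ "[]"]) (auto elim!: degree_eq_zeroE)
next
  case (Suc n p)
  let ?q = "map_poly complex_of_real p"
  have "degree ?q = Suc n" using Suc(2) by simp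
  hence "\<not> constant (poly ?q)" by (simp add: constant_degree)
  from fundamental_theorem_of_algebra[OF this] obtain z where z: "poly ?q z = 0" by auto
  have "Im z = 0" using Suc(4)[OF z] .
  then have zr: "z = complex_of_real (Re z)" by (simp add: complex_eq_iff)
  have "poly p (Re z) = 0" using z zr
    by (metis of_real_eq_0_iff of_real_hom.poly_map_poly)
  hence "[:-Re z,1 :] dvd p" by (simp add: dvd_iff_poly_eq_0)
  then obtain r where p: "p = [:-Re z,1 :] * r" by (metis dvd_def)
  have r0: "r \<noteq> 0" using Suc(2) p by auto
  have "degree p = degree [:-Re z,1 :] + degree r" unfolding p by (rule degree_mult_eq) (use r0 in auto)
  hence dr: "degree r = n" using Suc(2) by simp
  have "lead_coeff p = lead_coeff [:-Re z,1 :] * lead_coeff r" unfolding p by (rule lead_coeff_mult)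
  hence lr: "lead_coeff r = 1" using Suc(3) by simp
  have "\<And>w. poly (map_poly complex_of_real r) w = 0 \<Longrightarrow> Im w = 0"
  proof -
    fix w assume "poly (map_poly complex_of_real r) w = 0"
    moreover have "map_poly complex_of_real p = map_poly complex_of_real [:-Re z,1 :] * map_poly complex_of_real r"
      unfolding p by (rule of_real_poly_hom.hom_mult)
    ultimately have "poly ?q w = 0" by simp
    thus "Im w = 0" by (rule Suc(4))
  qed
  from Suc(1)[OF dr[symmetric] lr this] obtain es where "r = (\<Prod>e\<leftarrow>es. [:-e,1:])" by auto
  thus ?case unfolding p by (intro exI[of _ "Re z # es"]) auto
qed

lemma rev_real_eig:
  fixes A :: "real mat" and \<pi> :: "nat \<Rightarrow> real"
  assumes A: "A \<in> carrier_mat N N"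
  and pos: "\<And>i. i < N \<Longrightarrow> \<pi> i > 0"
  and rev: "\<And>i j. i < N \<Longrightarrow> j < N \<Longrightarrow> \<pi> i * A$$(i,j) = \<pi> j * A$$(j,i)"
  and root: "poly (char_poly (map_mat complex_of_real A)) z = 0"
  shows "Im z = 0"
proof -
  let ?A = "map_mat complex_of_real A"
  have Ac: "?A \<in> carrier_mat N N" using A by simp
  have "eigenvalue ?A z" using root eigenvalue_root_char_poly[OF Ac] by simp
  then obtain v where ev: "eigenvector ?A v z" unfolding eigenvalue_def by auto
  hence v: "v \<in> carrier_vec N" "v \<noteq> 0\<^sub>v N" "?A *\<^sub>v v = z \<cdot>\<^sub>v v"
    unfolding eigenvector_def using Ac by auto
  have eq: "(\<Sum>j<N. of_real (A$$(i,j)) * v$j) = z * v$i" if i: "i < N" for i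
  proof -
    have "(?A *\<^sub>v v) $ i = z * v$i" using v(3) i v(1) by simp
    moreover have "(?A *\<^sub>v v) $ i = (\<Sum>j<N. of_real (A$$(i,j)) * v$j)"
      using i A v(1) by (auto simp: mult_mat_vec_def scalar_prod_def lessThan_atLeast0 intro!: sum.cong)
    ultimately show ?thesis by simp
  qed
  define T where "T = (\<Sum>i<N. \<Sum>j<N. complex_of_real (\<pi> i * A$$(i,j)) * cnj (v$i) * v$j)"
  define W where "W = (\<Sum>i<N. \<pi> i * (cmod (v$i))^2)"
  have T1: "T = z * of_real W"
  proof -
    have "T = (\<Sum>i<N. of_real (\<pi> i) * cnj (v$i) * (\<Sum>j<N. of_real (A$$(i,j)) * v$j))"
      unfolding T_def by (auto simp: sum_distrib_left intro!: sum.cong simp: algebra_simps)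
    also have "\<dots> = (\<Sum>i<N. of_real (\<pi> i) * cnj (v$i) * (z * v$i))"
      by (intro sum.cong refl) (simp add: eq)
    also have "\<dots> = z * (\<Sum>i<N. of_real (\<pi> i) * (cnj (v$i) * v$i))"
      by (simp add: sum_distrib_left algebra_simps)
    also have "\<dots> = z * of_real W"
      unfolding W_def of_real_sum by (intro arg_cong[where f="\<lambda>x. z * x"] sum.cong refl) (simp add: complex_norm_square[symmetric] mult.commute)
    finally show ?thesis .
  qed
  have T2: "cnj T = T"
  proof -
    have "cnj T = (\<Sum>i<N. \<Sum>j<N. complex_of_real (\<pi> i * A$$(i,j)) * v$i * cnj (v$j))"
      unfolding T_def by (simp add: mult.commute)
    also have "\<dots> = (\<Sum>j<N. \<Sum>i<N. complex_of_real (\<pi> i * A$$(i,j)) * v$i * cnj (v$j))"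
      by (rule sum.swap)
    also have "\<dots> = T" unfolding T_def
      by (intro sum.cong refl) (simp add: rev algebra_simps)
    finally show ?thesis .
  qed
  have Wpos: "W > 0"
  proof -
    obtain k where k: "k < N" "v$k \<noteq> 0" using v(1,2) by (metis carrier_vecD eq_vecI index_zero_vec)
    have "\<pi> k * (cmod (v$k))^2 > 0" using pos k by simp
    also have "\<pi> k * (cmod (v$k))^2 \<le> W" unfolding W_def
    proof (rule member_le_sum)
      fix x assume "x \<in> {..<N} - {k}"
      hence "\<pi> x > 0" using pos by auto
      thus "0 \<le> \<pi> x * (cmod (v$x))^2" by simp
    qed (use k in auto)
    finally show ?thesis .
  qed
  from T1 T2 have "cnj z * of_real W = z * of_real W" by (metis complex_cnj_mult complex_cnj_complex_of_real)
  hence "cnj z = z" using Wpos by simp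
  thus ?thesis by (metis Reals_cnj_iff complex_is_Real_iff)
qed

lemma mat_vec_idx:
  assumes "A \<in> carrier_mat N N" "i < N"
  shows "(A *\<^sub>v vec N g) $ i = (\<Sum>k<N. A$$(i,k) * g k)"
  using assms by (auto simp: mult_mat_vec_def scalar_prod_def lessThan_atLeast0 intro!: sum.cong)

lemma mat_mult_idx:
  assumes "X \<in> carrier_mat N N" "Y \<in> carrier_mat N N" "i < N" "j < N"
  shows "(X * Y) $$ (i,j) = (\<Sum>k<N. X$$(i,k) * Y$$(k,j))"
  using assms by (auto simp: times_mat_def scalar_prod_def lessThan_atLeast0 intro!: sum.cong)

lemma stoch_no_drift:
  fixes A :: "real mat"
  assumes nn: "\<And>i k. i < N \<Longrightarrow> k < N \<Longrightarrow> A$$(i,k) \<ge> 0"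
  and rs: "\<And>i. i < N \<Longrightarrow> (\<Sum>k<N. A$$(i,k)) = 1"
  and N: "N > 0"
  and drift: "\<And>i. i < N \<Longrightarrow> (\<Sum>k<N. A$$(i,k) * g k) \<ge> g i + c"
  shows "c \<le> 0"
proof (rule ccontr)
  assume c: "\<not> c \<le> 0"
  obtain i0 where i0: "i0 \<in> {..<N}" "\<And>k. k \<in> {..<N} \<Longrightarrow> g k \<le> g i0"
  proof -
    have "Max (g ` {..<N}) \<in> g ` {..<N}" using N by (intro Max_in) auto
    then obtain i0 where "i0 \<in> {..<N}" "g i0 = Max (g ` {..<N})" by auto
    moreover have "\<And>k. k \<in> {..<N} \<Longrightarrow> g k \<le> Max (g ` {..<N})" by simp
    ultimately show ?thesis using that by metis
  qed
  have "(\<Sum>k<N. A$$(i0,k) * g k) \<le> (\<Sum>k<N. A$$(i0,k) * g i0)"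
    by (intro sum_mono mult_left_mono i0 nn) (use i0 in auto)
  also have "\<dots> = g i0" using rs[of i0] i0 by (simp add: sum_distrib_right[symmetric])
  finally show False using drift[of i0] i0 c by auto
qed

lemma prod_list_mset_cong:
  fixes f :: "'a \<Rightarrow> 'b::comm_monoid_mult"
  shows "mset xs = mset ys \<Longrightarrow> prod_list (map f xs) = prod_list (map f ys)"
proof -
  assume "mset xs = mset ys"
  hence "mset (map f xs) = mset (map f ys)" by simp
  thus ?thesis using prod_mset_prod_list[of "map f xs"] prod_mset_prod_list[of "map f ys"] by simp
qed

lemma simple_one:
  fixes A :: "real mat"
  assumes A: "A \<in> carrier_mat N N"
  and nn: "\<And>i k. i < N \<Longrightarrow> k < N \<Longrightarrow> A$$(i,k) \<ge> 0"
  and rs: "\<And>i. i < N \<Longrightarrow> (\<Sum>k<N. A$$(i,k)) = 1"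
  and const: "\<And>g. (\<And>i. i < N \<Longrightarrow> (\<Sum>k<N. A$$(i,k) * g k) = g i) \<Longrightarrow> \<forall>i<N. \<forall>j<N. g i = g j"
  and cp: "char_poly A = (\<Prod>e\<leftarrow>es. [:-e,1:])"
  shows "count (mset es) 1 \<le> 1"
proof (rule ccontr)
  assume "\<not> count (mset es) 1 \<le> 1"
  hence c2: "count (mset es) 1 \<ge> 2" by simp
  define rest where "rest = remove1 1 (remove1 1 es)"
  define es2 where "es2 = 1 # 1 # rest"
  have m2: "mset es2 = mset es"
  proof -
    have "count (mset es) 1 > 0" by (rule less_le_trans[OF _ c2]) simp
    hence "1 \<in># mset es" by (simp only: count_greater_zero_iff)
    hence e1: "mset es = add_mset 1 (mset (remove1 1 es))" by simp
    have "count (mset (remove1 1 es)) 1 \<ge> 1" using c2 by simp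
    hence "count (mset (remove1 1 es)) 1 > 0" by simp
    hence "1 \<in># mset (remove1 1 es)" by (simp only: count_greater_zero_iff)
    hence "mset (remove1 1 es) = add_mset 1 (mset (remove1 1 es) - {#1#})" by (simp only: insert_DiffM)
    moreover have "mset rest = mset (remove1 1 es) - {#1#}" unfolding rest_def by (simp only: mset_remove1)
    ultimately have "mset (remove1 1 es) = add_mset 1 (mset rest)" by simp
    with e1 show ?thesis unfolding es2_def by simp
  qed
  have cp2: "char_poly A = (\<Prod>e\<leftarrow>es2. [:-e,1:])" unfolding cp
    by (rule prod_list_mset_cong) (simp add: m2)
  obtain B P Q where BPQ: "schur_decomposition A es2 = (B,P,Q)" by (cases "schur_decomposition A es2") auto
  from schur_decomposition[OF A cp2 BPQ]
  have sim: "similar_mat_wit A B P Q" and ut: "upper_triangular B" and dg: "diag_mat B = es2" by auto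
  from sim A have Bc: "B \<in> carrier_mat N N" and Pc: "P \<in> carrier_mat N N" and Qc: "Q \<in> carrier_mat N N"
    and PQ: "P * Q = 1\<^sub>m N" and QP: "Q * P = 1\<^sub>m N" and AB: "A = P * B * Q"
    unfolding similar_mat_wit_def Let_def by auto
  have lenN: "length es2 = N" using dg Bc unfolding diag_mat_def by auto
  hence N2: "N \<ge> 2" unfolding es2_def by simp
  have B00: "B$$(0,0) = 1"
  proof -
    have "diag_mat B ! 0 = B$$(0,0)" using N2 Bc unfolding diag_mat_def by simp
    thus ?thesis using dg unfolding es2_def by simp
  qed
  have B11: "B$$(1,1) = 1"
  proof -
    have "diag_mat B ! 1 = B$$(1,1)" using N2 Bc unfolding diag_mat_def by simp
    thus ?thesis using dg unfolding es2_def by simp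
  qed
  have Blow: "B$$(k,j) = 0" if "k < N" "j < k" for k j
    using ut that Bc unfolding upper_triangular_def by auto
  have AP: "A * P = P * B"
  proof -
    have "A * P = P * B * Q * P" using AB by simp
    also have "\<dots> = P * B * (Q * P)" using Pc Bc Qc by (simp add: assoc_mult_mat[of _ N N _ N _ N])
    also have "\<dots> = P * B" using QP Pc Bc by simp
    finally show ?thesis .
  qed
  define b where "b = B$$(0,1)"
  have col0: "(\<Sum>k<N. A$$(i,k) * P$$(k,0)) = P$$(i,0)" if i: "i < N" for i
  proof -
    have "(\<Sum>k<N. A$$(i,k) * P$$(k,0)) = (A*P)$$(i,0)" using mat_mult_idx[OF A Pc i] N2 by simp
    also have "\<dots> = (P*B)$$(i,0)" using AP by simp
    also have "\<dots> = (\<Sum>k<N. P$$(i,k) * B$$(k,0))" using mat_mult_idx[OF Pc Bc i] N2 by simp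
    also have "\<dots> = (\<Sum>k<N. P$$(i,k) * (if k = 0 then 1 else 0))"
      by (intro sum.cong refl) (auto simp: B00 Blow)
    also have "\<dots> = P$$(i,0)" using N2 by (simp add: if_distrib cong: if_cong)
    finally show ?thesis .
  qed
  have col1: "(\<Sum>k<N. A$$(i,k) * P$$(k,1)) = P$$(i,0) * b + P$$(i,1)" if i: "i < N" for i
  proof -
    have "(\<Sum>k<N. A$$(i,k) * P$$(k,1)) = (A*P)$$(i,1)" using mat_mult_idx[OF A Pc i] N2 by simp
    also have "\<dots> = (P*B)$$(i,1)" using AP by simp
    also have "\<dots> = (\<Sum>k<N. P$$(i,k) * B$$(k,1))" using mat_mult_idx[OF Pc Bc i] N2 by simp
    also have "\<dots> = (\<Sum>k<N. (if k = 0 then P$$(i,0) * b else 0) + (if k = 1 then P$$(i,1) else 0))"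
    proof (intro sum.cong refl)
      fix k assume "k \<in> {..<N}"
      thus "P$$(i,k) * B$$(k,1) = (if k = 0 then P$$(i,0) * b else 0) + (if k = 1 then P$$(i,1) else 0)"
        by (cases "k = 0"; cases "k = 1") (auto simp: b_def B11 B11[unfolded One_nat_def] Blow)
    qed
    also have "\<dots> = P$$(i,0) * b + P$$(i,1)" using N2 by (simp add: sum.distrib)
    finally show ?thesis .
  qed
  have "\<forall>i<N. \<forall>j<N. P$$(i,0) = P$$(j,0)" by (rule const[of "\<lambda>k. P$$(k,0)"]) (rule col0)
  define c1 where "c1 = P$$(0,0)"
  have u1: "P$$(i,0) = c1" if "i < N" for i
    using \<open>\<forall>i<N. \<forall>j<N. P$$(i,0) = P$$(j,0)\<close> that N2 unfolding c1_def by (meson less_le_trans zero_less_numeral)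
  have d1: "c1 * b \<le> 0"
  proof (rule stoch_no_drift[OF nn rs, of "\<lambda>k. P$$(k,1)"])
    fix i assume i: "i < N"
    show "(\<Sum>k<N. A$$(i,k) * P$$(k,1)) \<ge> P$$(i,1) + c1 * b" using col1[OF i] u1[OF i] by simp
  qed (use N2 in auto)
  have d2: "- (c1 * b) \<le> 0"
  proof (rule stoch_no_drift[OF nn rs, of "\<lambda>k. - P$$(k,1)"])
    fix i assume i: "i < N"
    have "(\<Sum>k<N. A$$(i,k) * - P$$(k,1)) = - (\<Sum>k<N. A$$(i,k) * P$$(k,1))" by (simp add: sum_negf)
    thus "(\<Sum>k<N. A$$(i,k) * - P$$(k,1)) \<ge> - P$$(i,1) + - (c1 * b)" using col1[OF i] u1[OF i] by simp
  qed (use N2 in auto)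
  have "c1 * b = 0" using d1 d2 by simp
  hence "\<And>i. i < N \<Longrightarrow> (\<Sum>k<N. A$$(i,k) * P$$(k,1)) = P$$(i,1)" using col1 u1 by simp
  hence "\<forall>i<N. \<forall>j<N. P$$(i,1) = P$$(j,1)" by (rule const[of "\<lambda>k. P$$(k,1)"])
  define c2 where "c2 = P$$(0,1)"
  have u2: "P$$(i,1) = c2" if "i < N" for i
    using \<open>\<forall>i<N. \<forall>j<N. P$$(i,1) = P$$(j,1)\<close> that N2 unfolding c2_def by (meson less_le_trans zero_less_numeral)
  have q00: "(\<Sum>k<N. Q$$(0,k)) * c1 = 1"
  proof -
    have "(Q*P)$$(0,0) = 1" using QP N2 by simp
    moreover have "(Q*P)$$(0,0) = (\<Sum>k<N. Q$$(0,k) * P$$(k,0))" using mat_mult_idx[OF Qc Pc] N2 by simp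
    ultimately show ?thesis using u1 by (simp add: sum_distrib_right)
  qed
  have q01: "(\<Sum>k<N. Q$$(0,k)) * c2 = 0"
  proof -
    have "(Q*P)$$(0,1) = 0" using QP N2 by simp
    moreover have "(Q*P)$$(0,1) = (\<Sum>k<N. Q$$(0,k) * P$$(k,1))" using mat_mult_idx[OF Qc Pc] N2 by simp
    ultimately show ?thesis using u2 by (simp add: sum_distrib_right)
  qed
  have q11: "(\<Sum>k<N. Q$$(1,k)) * c2 = 1"
  proof -
    have "(Q*P)$$(1,1) = 1" using QP N2 by simp
    moreover have "(Q*P)$$(1,1) = (\<Sum>k<N. Q$$(1,k) * P$$(k,1))" using mat_mult_idx[OF Qc Pc] N2 by simp
    ultimately show ?thesis using u2 by (simp add: sum_distrib_right)
  qed
  from q00 q01 have "c2 = 0" by auto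
  with q11 show False by simp
qed

lemma lin_prod_props:
  fixes es :: "real list"
  shows "proots (\<Prod>e\<leftarrow>es. [:-e,1:]) = mset es \<and> (\<Prod>e\<leftarrow>es. [:-e,1:]) \<noteq> 0"
proof (induct es)
  case (Cons e es)
  let ?p = "(\<Prod>e\<leftarrow>es. [:-e,1:])"
  have pm: "proots ([:-e,1:] * ?p) = proots [:-e,1:] + proots ?p"
    by (rule proots_mult) (use Cons in auto)
  have nz: "[:-e,1:] * ?p \<noteq> 0" using Cons by (intro no_zero_divisors) auto
  have eq: "(\<Prod>x\<leftarrow>e#es. [:-x,1:]) = [:-e,1:] * ?p" by simp
  show ?case
  proof (intro conjI)
    show "proots (\<Prod>x\<leftarrow>e#es. [:-x,1:]) = mset (e#es)" unfolding eq pm using Cons by simp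
    show "(\<Prod>x\<leftarrow>e#es. [:-x,1:]) \<noteq> 0" unfolding eq by (rule nz)
  qed
qed simp

lemma vec_of_fun_mult:
  assumes A: "A \<in> carrier_mat N N" and v: "v \<in> carrier_vec N" and i: "i < N"
  shows "(A *\<^sub>v v) $ i = (\<Sum>k<N. A$$(i,k) * v$k)"
proof -
  have "v = vec N (\<lambda>k. v$k)" using v by auto
  hence "(A *\<^sub>v v) $ i = (A *\<^sub>v vec N (\<lambda>k. v$k)) $ i" by simp
  also have "\<dots> = (\<Sum>k<N. A$$(i,k) * v$k)" by (rule mat_vec_idx[OF A i])
  finally show ?thesis .
qed

lemma gap_abstract:
  fixes A :: "real mat" and \<epsilon> :: real and \<pi> :: "nat \<Rightarrow> real"
  assumes A: "A \<in> carrier_mat N N" and N2: "N \<ge> 2" and eps: "\<epsilon> > 0"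
  and nn: "\<And>i k. i < N \<Longrightarrow> k < N \<Longrightarrow> A$$(i,k) \<ge> 0"
  and rs: "\<And>i. i < N \<Longrightarrow> (\<Sum>k<N. A$$(i,k)) = 1"
  and pos: "\<And>i. i < N \<Longrightarrow> \<pi> i > 0"
  and rev: "\<And>i j. i < N \<Longrightarrow> j < N \<Longrightarrow> \<pi> i * A$$(i,j) = \<pi> j * A$$(j,i)"
  and eigc: "\<And>g. (\<And>i. i < N \<Longrightarrow> (\<Sum>k<N. A$$(i,k) * g k) = g i) \<Longrightarrow> \<forall>i<N. \<forall>j<N. g i = g j"
  and eigb: "\<And>g l. (\<And>i. i < N \<Longrightarrow> (\<Sum>k<N. A$$(i,k) * g k) = l * g i) \<Longrightarrow> l \<noteq> 1 \<Longrightarrow>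
      (\<exists>i<N. g i \<noteq> 0) \<Longrightarrow> \<bar>l\<bar> \<le> 1 - \<epsilon>"
  shows "\<epsilon> \<le> 1 - max \<bar>eigs_desc A ! 1\<bar> \<bar>last (eigs_desc A)\<bar>"
proof -
  let ?cp = "char_poly A"
  have dm: "degree ?cp = N \<and> coeff ?cp N = 1" by (rule degree_monic_char_poly[OF A])
  have cp0: "?cp \<noteq> 0" using dm by auto
  have "\<exists>es. ?cp = (\<Prod>e\<leftarrow>es. [:-e,1:])"
  proof (rule real_poly_split)
    show "lead_coeff ?cp = 1" using dm by simp
    fix z assume "poly (map_poly complex_of_real ?cp) z = 0"
    moreover have "char_poly (map_mat complex_of_real A) = map_poly complex_of_real ?cp" by (rule of_real_hom.char_poly_hom[OF A])
    ultimately have "poly (char_poly (map_mat complex_of_real A)) z = 0" by simp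
    thus "Im z = 0" using rev_real_eig[OF A, of \<pi> z] pos rev by blast
  qed
  then obtain es where cp: "?cp = (\<Prod>e\<leftarrow>es. [:-e,1:])" by auto
  have pr: "proots ?cp = mset es" using lin_prod_props[of es] cp by simp
  have len: "length es = N"
  proof -
    have "size (proots ?cp) \<le> degree ?cp" by (rule size_proots_le)
    have "degree (\<Prod>e\<leftarrow>es. [:-e,1:]) = length es"
    proof (induct es)
      case (Cons e es)
      have "(\<Prod>e\<leftarrow>es. [:-e,1:]) \<noteq> 0" using lin_prod_props[of es] by simp
      hence "degree ([:-e,1:] * (\<Prod>e\<leftarrow>es. [:-e,1:])) = degree [:-e,1:] + degree (\<Prod>e\<leftarrow>es. [:-e,1:])"
        by (intro degree_mult_eq) auto
      thus ?case using Cons by simp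
    qed simp
    thus ?thesis using dm cp by simp
  qed
  have root_eig: "poly ?cp e = 0 \<Longrightarrow> \<exists>v. v \<in> carrier_vec N \<and> v \<noteq> 0\<^sub>v N \<and> A *\<^sub>v v = e \<cdot>\<^sub>v v" for e
    using eigenvalue_root_char_poly[OF A, of e] A unfolding eigenvalue_def eigenvector_def by auto
  have bnd: "\<bar>e\<bar> \<le> 1 - \<epsilon>" if e: "e \<in> set es" "e \<noteq> 1" for e
  proof -
    have "e \<in># proots ?cp" using pr e by simp
    hence "poly ?cp e = 0" using set_count_proots[OF cp0] by blast
    then obtain v where v: "v \<in> carrier_vec N" "v \<noteq> 0\<^sub>v N" "A *\<^sub>v v = e \<cdot>\<^sub>v v" using root_eig by blast
    show ?thesis
    proof (rule eigb[of "\<lambda>k. v$k"])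
      fix i assume i: "i < N"
      show "(\<Sum>k<N. A$$(i,k) * v$k) = e * v$i" using vec_of_fun_mult[OF A v(1) i] v(3) i v(1) by simp
    next
      show "\<exists>i<N. v$i \<noteq> 0" using v(1,2) by (metis carrier_vecD eq_vecI index_zero_vec)
    qed (use e in auto)
  qed
  have one_in: "1 \<in> set es"
  proof -
    let ?v = "vec N (\<lambda>_. 1::real)"
    have "A *\<^sub>v ?v = 1 \<cdot>\<^sub>v ?v"
    proof (rule eq_vecI)
      fix i assume "i < dim_vec (1 \<cdot>\<^sub>v ?v)"
      hence i: "i < N" by simp
      show "(A *\<^sub>v ?v) $ i = (1 \<cdot>\<^sub>v ?v) $ i" using mat_vec_idx[OF A i, of "\<lambda>_. 1"] rs[OF i] i by simp
    qed (use A in simp)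
    moreover have "?v \<noteq> 0\<^sub>v N" using N2 by (metis index_vec index_zero_vec(1) le0 less_le_trans one_neq_zero pos2)
    ultimately have "eigenvalue A 1" unfolding eigenvalue_def eigenvector_def using A
      by (intro exI[of _ ?v]) auto
    hence "poly ?cp 1 = 0" using eigenvalue_root_char_poly[OF A] by simp
    hence "1 \<in># proots ?cp" using set_count_proots[OF cp0] by blast
    thus ?thesis using pr by simp
  qed
  have c1: "count (mset es) 1 \<le> 1" by (rule simple_one[OF A nn rs eigc cp])
  define m' where "m' = mset es - {#1#}"
  have mes: "mset es = add_mset 1 m'" unfolding m'_def using one_in by simp
  have c0: "1 \<notin># m'"
  proof -
    have "count (mset es) 1 = Suc (count m' 1)" using mes by simp
    hence "count m' 1 = 0" using c1 by simp
    thus ?thesis by (simp add: not_in_iff)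
  qed
  have m'b: "\<bar>x\<bar> \<le> 1 - \<epsilon>" if "x \<in># m'" for x
  proof -
    have "x \<in># mset es" using that mes by simp
    hence "x \<in> set es" by simp
    moreover have "x \<noteq> 1" using that c0 by auto
    ultimately show ?thesis by (rule bnd)
  qed
  define ys where "ys = sorted_list_of_multiset m'"
  have ysm: "mset ys = m'" unfolding ys_def by simp
  have ysne: "ys \<noteq> []"
  proof -
    have "size (mset es) = Suc (size m')" using mes by simp
    hence "length ys = N - 1" using len ysm by (metis diff_Suc_1 size_mset)
    thus ?thesis using N2 by auto
  qed
  have srt: "sort es = ys @ [1]"
  proof (rule properties_for_sort)
    show "mset (ys @ [1]) = mset es" using ysm mes by simp
    have "\<forall>x\<in>set ys. x \<le> 1"
    proof
      fix x assume "x \<in> set ys"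
      hence "x \<in># m'" using ysm by (metis set_mset_mset)
      hence "\<bar>x\<bar> \<le> 1 - \<epsilon>" by (rule m'b)
      thus "x \<le> 1" using eps by linarith
    qed
    thus "sorted (ys @ [1])" by (simp add: sorted_append ys_def)
  qed
  have ev: "eigs_desc A = 1 # rev ys" unfolding eigs_desc_def pr using srt by simp
  have e1: "eigs_desc A ! 1 \<in> set ys" unfolding ev using ysne by (simp add: hd_conv_nth[symmetric] hd_rev)
  have e2: "last (eigs_desc A) \<in> set ys" unfolding ev using ysne by (simp add: last_rev)
  have "\<bar>eigs_desc A ! 1\<bar> \<le> 1 - \<epsilon>" using e1 m'b ysm by (metis set_mset_mset)
  moreover have "\<bar>last (eigs_desc A)\<bar> \<le> 1 - \<epsilon>" using e2 m'b ysm by (metis set_mset_mset)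
  ultimately show ?thesis by simp
qed



definition cfadd :: "config \<Rightarrow> config \<Rightarrow> config" where
  "cfadd \<alpha> \<beta> = (\<lambda>v. \<alpha> v + \<beta> v)"

definition restr :: "config \<Rightarrow> vtx set \<Rightarrow> config" where
  "restr \<sigma> X = (\<lambda>v. if v \<in> X then \<sigma> v else 0)"

lemma configs_split_bij:
  assumes "X \<inter> Y = {}"
  shows "bij_betw (\<lambda>(\<alpha>,\<beta>). cfadd \<alpha> \<beta>) (configs X q \<times> configs Y q) (configs (X \<union> Y) q)"
proof (rule bij_betw_byWitness[where f' = "\<lambda>\<sigma>. (restr \<sigma> X, restr \<sigma> Y)"])
  show "\<forall>a\<in>configs X q \<times> configs Y q. (\<lambda>\<sigma>. (restr \<sigma> X, restr \<sigma> Y)) ((\<lambda>(\<alpha>, \<beta>). cfadd \<alpha> \<beta>) a) = a"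
    using assms by (auto simp: configs_def cfadd_def restr_def fun_eq_iff)
  show "\<forall>a'\<in>configs (X \<union> Y) q. (\<lambda>(\<alpha>, \<beta>). cfadd \<alpha> \<beta>) ((\<lambda>\<sigma>. (restr \<sigma> X, restr \<sigma> Y)) a') = a'"
    using assms by (auto simp: configs_def cfadd_def restr_def fun_eq_iff)
  show "(\<lambda>(\<alpha>, \<beta>). cfadd \<alpha> \<beta>) ` (configs X q \<times> configs Y q) \<subseteq> configs (X \<union> Y) q"
    using assms by (auto simp: configs_def cfadd_def)
  show "(\<lambda>\<sigma>. (restr \<sigma> X, restr \<sigma> Y)) ` configs (X \<union> Y) q \<subseteq> configs X q \<times> configs Y q"
    by (auto simp: configs_def restr_def)
qed

lemma sum_configs_split:
  assumes "X \<inter> Y = {}"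
  shows "(\<Sum>\<sigma>\<in>configs (X \<union> Y) q. F \<sigma>) = (\<Sum>\<alpha>\<in>configs X q. \<Sum>\<beta>\<in>configs Y q. F (cfadd \<alpha> \<beta>))"
proof -
  have "(\<Sum>\<sigma>\<in>configs (X \<union> Y) q. F \<sigma>) = (\<Sum>p\<in>configs X q \<times> configs Y q. F ((\<lambda>(\<alpha>,\<beta>). cfadd \<alpha> \<beta>) p))"
    by (rule sum.reindex_bij_betw[OF configs_split_bij[OF assms], symmetric])
  also have "\<dots> = (\<Sum>\<alpha>\<in>configs X q. \<Sum>\<beta>\<in>configs Y q. F (cfadd \<alpha> \<beta>))"
    by (simp add: sum.cartesian_product case_prod_unfold)
  finally show ?thesis by (simp add: case_prod_unfold)
qed

lemma card_configs:
  assumes "finite X"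
  shows "card (configs X q) = q ^ card X"
proof -
  have bij: "bij_betw (\<lambda>f. \<lambda>v. if v \<in> X then f v else 0) (PiE X (\<lambda>_. {1..q})) (configs X q)"
  proof (rule bij_betw_byWitness[where f' = "\<lambda>\<sigma>. restrict \<sigma> X"])
    show "\<forall>a\<in>PiE X (\<lambda>_. {1..q}). restrict (\<lambda>v. if v \<in> X then a v else 0) X = a"
      by (auto simp: PiE_def extensional_def fun_eq_iff)
    show "\<forall>a'\<in>configs X q. (\<lambda>v. if v \<in> X then restrict a' X v else 0) = a'"
      by (auto simp: configs_def fun_eq_iff)
    show "(\<lambda>f v. if v \<in> X then f v else 0) ` PiE X (\<lambda>_. {1..q}) \<subseteq> configs X q"
      by (auto simp: configs_def PiE_def Pi_def)
    show "(\<lambda>\<sigma>. restrict \<sigma> X) ` configs X q \<subseteq> PiE X (\<lambda>_. {1..q})"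
      by (auto simp: configs_def)
  qed
  have "card (configs X q) = card (PiE X (\<lambda>_. {1..q}))" using bij_betw_same_card[OF bij] by simp
  also have "\<dots> = q ^ card X" using assms by (simp add: card_PiE)
  finally show ?thesis .
qed

lemma finite_configs: "finite X \<Longrightarrow> finite (configs X q)"
proof -
  assume "finite X"
  have "configs X q \<subseteq> (\<lambda>f. \<lambda>v. if v \<in> X then f v else 0) ` PiE X (\<lambda>_. {1..q})"
  proof
    fix \<sigma> assume s: "\<sigma> \<in> configs X q"
    have "\<sigma> = (\<lambda>v. if v \<in> X then restrict \<sigma> X v else 0)" using s by (auto simp: configs_def fun_eq_iff)
    moreover have "restrict \<sigma> X \<in> PiE X (\<lambda>_. {1..q})" using s by (auto simp: configs_def)
    ultimately show "\<sigma> \<in> (\<lambda>f. \<lambda>v. if v \<in> X then f v else 0) ` PiE X (\<lambda>_. {1..q})" by blast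
  qed
  thus ?thesis using \<open>finite X\<close> by (rule finite_subset[OF _ finite_imageI[OF finite_PiE]]) auto
qed

lemma sum_agree:
  assumes fin: "finite X" and U: "U \<subseteq> X" and s0: "\<And>v. v \<in> U \<Longrightarrow> \<sigma>0 v \<in> {1..q}"
  shows "(\<Sum>\<kappa>\<in>configs X q. (if \<forall>v\<in>U. \<kappa> v = \<sigma>0 v then c else 0)) = c * real q ^ card (X - U)"
proof -
  have XU: "X = U \<union> (X - U)" using U by auto
  have "(\<Sum>\<kappa>\<in>configs X q. (if \<forall>v\<in>U. \<kappa> v = \<sigma>0 v then c else 0))
      = (\<Sum>\<alpha>\<in>configs U q. \<Sum>\<beta>\<in>configs (X - U) q. (if \<forall>v\<in>U. cfadd \<alpha> \<beta> v = \<sigma>0 v then c else 0))"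
    by (subst XU, rule sum_configs_split) auto
  also have "\<dots> = (\<Sum>\<alpha>\<in>configs U q. \<Sum>\<beta>\<in>configs (X - U) q. (if \<alpha> = restr \<sigma>0 U then c else 0))"
  proof (intro sum.cong refl)
    fix \<alpha> \<beta> assume a: "\<alpha> \<in> configs U q" and b: "\<beta> \<in> configs (X - U) q"
    have "(\<forall>v\<in>U. cfadd \<alpha> \<beta> v = \<sigma>0 v) \<longleftrightarrow> (\<forall>v\<in>U. \<alpha> v = \<sigma>0 v)"
      using b by (auto simp: cfadd_def configs_def)
    also have "\<dots> \<longleftrightarrow> \<alpha> = restr \<sigma>0 U" using a by (auto simp: configs_def restr_def fun_eq_iff)
    finally show "(if \<forall>v\<in>U. cfadd \<alpha> \<beta> v = \<sigma>0 v then c else 0) = (if \<alpha> = restr \<sigma>0 U then c else 0)" by simp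
  qed
  also have "\<dots> = (\<Sum>\<alpha>\<in>configs U q. (if \<alpha> = restr \<sigma>0 U then c * real (card (configs (X - U) q)) else 0))"
    by (intro sum.cong refl) simp
  also have "\<dots> = c * real (card (configs (X - U) q))"
  proof -
    have "restr \<sigma>0 U \<in> configs U q" using s0 by (auto simp: configs_def restr_def)
    moreover have "finite (configs U q)" using finite_configs[of U q] fin U finite_subset by blast
    ultimately show ?thesis by (simp add: sum.delta)
  qed
  also have "\<dots> = c * real q ^ card (X - U)" using fin by (simp add: card_configs)
  finally show ?thesis .
qed

lemma sum_Pow_split:
  assumes "X \<inter> Y = {}"
  shows "(\<Sum>A\<in>Pow (X \<union> Y). g A) = (\<Sum>A1\<in>Pow X. \<Sum>A2\<in>Pow Y. g (A1 \<union> A2))"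
proof -
  have bij: "bij_betw (\<lambda>(A1,A2). A1 \<union> A2) (Pow X \<times> Pow Y) (Pow (X \<union> Y))"
    by (rule bij_betw_byWitness[where f' = "\<lambda>A. (A \<inter> X, A \<inter> Y)"]) (use assms in auto)
  have "(\<Sum>A\<in>Pow (X \<union> Y). g A) = (\<Sum>p\<in>Pow X \<times> Pow Y. g ((\<lambda>(A1,A2). A1 \<union> A2) p))"
    by (rule sum.reindex_bij_betw[OF bij, symmetric])
  also have "\<dots> = (\<Sum>A1\<in>Pow X. \<Sum>A2\<in>Pow Y. g (A1 \<union> A2))"
    by (simp add: sum.cartesian_product case_prod_unfold)
  finally show ?thesis .
qed

definition Wt :: "real \<Rightarrow> 'a set \<Rightarrow> 'a set \<Rightarrow> real" where
  "Wt p M A = p ^ card A * (1 - p) ^ (card M - card A)"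

lemma Wt_mult:
  assumes "finite X" "finite Y" "X \<inter> Y = {}" "A1 \<subseteq> X" "A2 \<subseteq> Y"
  shows "Wt p (X \<union> Y) (A1 \<union> A2) = Wt p X A1 * Wt p Y A2"
proof -
  have c1: "card (X \<union> Y) = card X + card Y" using assms by (simp add: card_Un_disjoint)
  have c2: "card (A1 \<union> A2) = card A1 + card A2" using assms
    by (intro card_Un_disjoint) (auto intro: finite_subset)
  have "card A1 \<le> card X" "card A2 \<le> card Y" using assms by (auto intro: card_mono)
  hence "card X + card Y - (card A1 + card A2) = (card X - card A1) + (card Y - card A2)" by simp
  thus ?thesis unfolding Wt_def c1 c2 by (simp add: power_add)
qed

lemma Wt_sum:
  assumes "finite M"
  shows "(\<Sum>A\<in>Pow M. Wt p M A) = 1"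
  using assms
proof (induct M rule: finite_induct)
  case empty
  then show ?case by (simp add: Wt_def)
next
  case (insert a M)
  have "(\<Sum>A\<in>Pow (M \<union> {a}). Wt p (M \<union> {a}) A) = (\<Sum>A1\<in>Pow M. \<Sum>A2\<in>Pow {a}. Wt p (M \<union> {a}) (A1 \<union> A2))"
    by (rule sum_Pow_split) (use insert in auto)
  also have "\<dots> = (\<Sum>A1\<in>Pow M. \<Sum>A2\<in>Pow {a}. Wt p M A1 * Wt p {a} A2)"
    by (intro sum.cong refl Wt_mult) (use insert in auto)
  also have "\<dots> = (\<Sum>A1\<in>Pow M. Wt p M A1 * (\<Sum>A2\<in>Pow {a}. Wt p {a} A2))"
    by (simp add: sum_distrib_left)
  also have "(\<Sum>A2\<in>Pow {a}. Wt p {a} A2) = 1"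
  proof -
    have "Pow {a} = {{},{a}}" by blast
    thus ?thesis by (simp add: Wt_def)
  qed
  finally show ?case using insert by simp
qed

lemma Wt_nonneg: "0 \<le> p \<Longrightarrow> p \<le> 1 \<Longrightarrow> 0 \<le> Wt p M A"
  unfolding Wt_def by simp



locale potts =
  fixes d :: nat and V :: "vtx set" and q :: nat and \<beta> :: real and L :: nat and x :: vtx and \<tau> :: config
  assumes finV: "finite V" and Vz: "\<And>y i. y \<in> V \<Longrightarrow> d \<le> i \<Longrightarrow> y i = 0"
    and q2: "q \<ge> 2" and bpos: "\<beta> > 0" and oddL: "odd L"
begin

abbreviation "B \<equiv> block d V L x"
abbreviation "S \<equiv> configs B q"
abbreviation "E \<equiv> edges d V"
definition "p = 1 - exp (- \<beta>)"
definition "Mo \<sigma> = mono_edges E (glue B \<sigma> \<tau>)"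
definition "agr \<sigma> A \<sigma>' \<longleftrightarrow> (\<forall>v\<in>B. v \<in> \<Union>A \<longrightarrow> \<sigma>' v = \<sigma> v)"
definition "Kr \<sigma> A \<sigma>' = (if agr \<sigma> A \<sigma>' then (1 / real q) ^ card {v\<in>B. v \<notin> \<Union>A} else 0)"
definition "Pk \<sigma> \<sigma>' = I_kernel d V q \<beta> B \<tau> \<sigma> \<sigma>'"

lemma Pk_eq: "Pk \<sigma> \<sigma>' = (\<Sum>A\<in>Pow (Mo \<sigma>). Wt p (Mo \<sigma>) A * Kr \<sigma> A \<sigma>')"
  unfolding Pk_def I_kernel_def Let_def Wt_def Kr_def agr_def Mo_def p_def
  by (simp add: mult.assoc)

lemma p01: "0 < p" "p < 1" "1 - p = exp (- \<beta>)"
  using bpos unfolding p_def by auto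

lemma finB: "finite B" using finV unfolding block_def by auto
lemma BV: "B \<subseteq> V" unfolding block_def by auto
lemma finS: "finite S" using finB by (rule finite_configs)

lemma finE: "finite E"
proof -
  have "E \<subseteq> (\<lambda>(u,v). {u,v}) ` (V \<times> V)" unfolding edges_def by auto
  thus ?thesis using finV by (auto intro: finite_subset)
qed

lemma Mo_sub: "Mo \<sigma> \<subseteq> E" unfolding Mo_def mono_edges_def by auto
lemma finMo: "finite (Mo \<sigma>)" using Mo_sub finE by (rule finite_subset)

lemma Kr_nonneg: "0 \<le> Kr \<sigma> A \<sigma>'" unfolding Kr_def by simp

lemma Kr_sum:
  assumes s: "\<sigma> \<in> S"
  shows "(\<Sum>\<sigma>'\<in>S. Kr \<sigma> A \<sigma>') = 1"
proof -
  let ?U = "B \<inter> \<Union>A"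
  have cset: "{v\<in>B. v \<notin> \<Union>A} = B - ?U" by auto
  have "(\<Sum>\<sigma>'\<in>S. Kr \<sigma> A \<sigma>') = (\<Sum>\<sigma>'\<in>S. (if \<forall>v\<in>?U. \<sigma>' v = \<sigma> v then (1 / real q) ^ card (B - ?U) else 0))"
    unfolding Kr_def agr_def cset by (intro sum.cong refl) auto
  also have "\<dots> = (1 / real q) ^ card (B - ?U) * real q ^ card (B - ?U)"
    by (rule sum_agree) (use finB s in \<open>auto simp: configs_def\<close>)
  also have "\<dots> = 1" using q2 by (simp add: power_mult_distrib[symmetric])
  finally show ?thesis .
qed

lemma Pk_nonneg: "0 \<le> Pk \<sigma> \<sigma>'"
  unfolding Pk_eq using p01 by (intro sum_nonneg mult_nonneg_nonneg Wt_nonneg Kr_nonneg) auto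

lemma Pk_sum:
  assumes s: "\<sigma> \<in> S"
  shows "(\<Sum>\<sigma>'\<in>S. Pk \<sigma> \<sigma>') = 1"
proof -
  have "(\<Sum>\<sigma>'\<in>S. Pk \<sigma> \<sigma>') = (\<Sum>A\<in>Pow (Mo \<sigma>). Wt p (Mo \<sigma>) A * (\<Sum>\<sigma>'\<in>S. Kr \<sigma> A \<sigma>'))"
    unfolding Pk_eq by (simp add: sum.swap[of _ S] sum_distrib_left)
  also have "\<dots> = (\<Sum>A\<in>Pow (Mo \<sigma>). Wt p (Mo \<sigma>) A)" using Kr_sum[OF s] by simp
  also have "\<dots> = 1" by (rule Wt_sum[OF finMo])
  finally show ?thesis .
qed

lemma mono_transfer:
  assumes "A \<subseteq> Mo \<sigma>" "agr \<sigma> A \<sigma>'"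
  shows "A \<subseteq> Mo \<sigma>'"
proof
  fix e assume e: "e \<in> A"
  then obtain u v where ev: "e \<in> E" "e = {u,v}" "glue B \<sigma> \<tau> u = glue B \<sigma> \<tau> v"
    using assms(1) unfolding Mo_def mono_edges_def by auto
  have "glue B \<sigma>' \<tau> w = glue B \<sigma> \<tau> w" if "w \<in> e" for w
    using assms(2) e that unfolding agr_def glue_def by auto
  hence "glue B \<sigma>' \<tau> u = glue B \<sigma>' \<tau> v" using ev by auto
  thus "e \<in> Mo \<sigma>'" using ev unfolding Mo_def mono_edges_def by auto
qed

definition "piw \<sigma> = exp (\<beta> * real (card (Mo \<sigma>)))"

lemma piw_pos: "piw \<sigma> > 0" unfolding piw_def by simp

lemma piw_Wt:
  assumes "A \<subseteq> Mo \<sigma>"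
  shows "piw \<sigma> * Wt p (Mo \<sigma>) A = (p * exp \<beta>) ^ card A"
proof -
  have le: "card A \<le> card (Mo \<sigma>)" using assms finMo by (rule card_mono[rotated])
  have "piw \<sigma> * Wt p (Mo \<sigma>) A = p ^ card A * (exp (\<beta> * card (Mo \<sigma>)) * exp (- \<beta>) ^ (card (Mo \<sigma>) - card A))"
    unfolding piw_def Wt_def p01(3) by simp
  also have "exp (- \<beta>) ^ (card (Mo \<sigma>) - card A) = exp (- \<beta> * real (card (Mo \<sigma>) - card A))"
    by (simp add: exp_of_nat_mult[symmetric] mult.commute)
  also have "exp (\<beta> * card (Mo \<sigma>)) * \<dots> = exp (\<beta> * card A)"
    using le by (simp add: exp_add[symmetric] of_nat_diff algebra_simps)
  also have "p ^ card A * exp (\<beta> * card A) = (p * exp \<beta>) ^ card A"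
    by (simp add: power_mult_distrib exp_of_nat_mult[symmetric] mult.commute)
  finally show ?thesis .
qed

lemma reversible:
  shows "piw \<sigma> * Pk \<sigma> \<sigma>' = piw \<sigma>' * Pk \<sigma>' \<sigma>"
proof -
  define g where "g A = (p * exp \<beta>) ^ card A * (1 / real q) ^ card {v\<in>B. v \<notin> \<Union>A}" for A :: "vtx set set"
  define T where "T = {A \<in> Pow E. A \<subseteq> Mo \<sigma> \<and> A \<subseteq> Mo \<sigma>' \<and> agr \<sigma> A \<sigma>'}"
  have agr_sym: "agr \<sigma> A \<sigma>' = agr \<sigma>' A \<sigma>" for A unfolding agr_def by auto
  have key: "piw s * Pk s s' = (\<Sum>A\<in>T. g A)" if ss: "(s = \<sigma> \<and> s' = \<sigma>') \<or> (s = \<sigma>' \<and> s' = \<sigma>)" for s s'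
  proof -
    have mt: "A \<in> Pow E \<and> A \<subseteq> Mo t'" if "A \<subseteq> Mo t" "agr t A t'" for A t t'
      using mono_transfer[OF that] Mo_sub by auto
    have T': "T = {A \<in> Pow (Mo s). agr s A s'}" unfolding T_def using ss agr_sym mt by blast
    have "piw s * Pk s s' = (\<Sum>A\<in>Pow (Mo s). piw s * Wt p (Mo s) A * Kr s A s')"
      unfolding Pk_eq by (simp add: sum_distrib_left mult.assoc)
    also have "\<dots> = (\<Sum>A\<in>Pow (Mo s). (if agr s A s' then g A else 0))"
      by (intro sum.cong refl) (auto simp: piw_Wt Kr_def g_def)
    also have "\<dots> = (\<Sum>A\<in>T. g A)" unfolding T' using finMo
      by (simp add: sum.If_cases Int_def)
    finally show ?thesis .
  qed
  show ?thesis using key[of \<sigma> \<sigma>'] key[of \<sigma>' \<sigma>] by simp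
qed

definition "rad = (L - 1) div 2"
definition "ctr h i = x i + int (L+3) * h i"
definition "Cb h = {y \<in> B. \<forall>i<d. \<bar>y i - ctr h i\<bar> \<le> int rad}"

lemma Cb_sub: "Cb h \<subseteq> B" unfolding Cb_def by auto

lemma B_cover: "v \<in> B \<Longrightarrow> \<exists>h. v \<in> Cb h"
  unfolding Cb_def block_def ctr_def rad_def by auto

lemma two_rad: "2 * int rad + 1 = int L"
  using oddL unfolding rad_def by (auto elim!: oddE)

lemma adj_coord: "adj d u w \<Longrightarrow> i < d \<Longrightarrow> \<bar>u i - w i\<bar> \<le> 1"
proof -
  assume a: "adj d u w" and i: "i < d"
  have "\<bar>u i - w i\<bar> \<le> (\<Sum>j<d. \<bar>u j - w j\<bar>)" by (rule member_le_sum) (use i in auto)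
  thus ?thesis using a unfolding adj_def by simp
qed

lemma adj_sym: "adj d u w \<Longrightarrow> adj d w u"
  unfolding adj_def by (simp add: abs_minus_commute)

lemma sep:
  assumes u: "u \<in> Cb h" and w: "w \<in> B" and a: "adj d u w"
  shows "w \<in> Cb h"
proof -
  obtain h' where w': "w \<in> Cb h'" using B_cover[OF w] by auto
  have "\<bar>w i - ctr h i\<bar> \<le> int rad" if i: "i < d" for i
  proof -
    have k1: "\<bar>u i - ctr h i\<bar> \<le> int rad" using u i unfolding Cb_def by auto
    have k2: "\<bar>w i - ctr h' i\<bar> \<le> int rad" using w' i unfolding Cb_def by auto
    have k3: "\<bar>u i - w i\<bar> \<le> 1" using adj_coord[OF a i] .
    have "ctr h i - ctr h' i = int (L+3) * (h i - h' i)" unfolding ctr_def by (simp add: algebra_simps)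
    moreover have "\<bar>ctr h i - ctr h' i\<bar> \<le> int L"
    proof -
      have "ctr h i - ctr h' i = (w i - ctr h' i) - (u i - ctr h i) - (w i - u i)" by simp
      hence "\<bar>ctr h i - ctr h' i\<bar> \<le> \<bar>w i - ctr h' i\<bar> + \<bar>u i - ctr h i\<bar> + \<bar>u i - w i\<bar>" by linarith
      thus ?thesis using k1 k2 k3 two_rad by linarith
    qed
    ultimately have le: "\<bar>int (L+3) * (h i - h' i)\<bar> \<le> int L" by simp
    have "h i = h' i"
    proof (rule ccontr)
      assume "h i \<noteq> h' i"
      hence "\<bar>h i - h' i\<bar> \<ge> 1" by linarith
      hence "int (L+3) * 1 \<le> int (L+3) * \<bar>h i - h' i\<bar>" by (intro mult_left_mono) auto
      hence "\<bar>int (L+3) * (h i - h' i)\<bar> \<ge> int (L+3) * 1" by (simp add: abs_mult)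
      thus False using le by simp
    qed
    hence "ctr h i = ctr h' i" unfolding ctr_def by simp
    thus ?thesis using k2 by simp
  qed
  thus ?thesis using w unfolding Cb_def by auto
qed

lemma card_Cb: "card (Cb h) \<le> L ^ d"
proof -
  define lo where "lo i = ctr h i - int rad" for i
  define \<phi> where "\<phi> y = restrict (\<lambda>i. nat (y i - lo i)) {..<d}" for y :: vtx
  have maps: "\<phi> ` Cb h \<subseteq> PiE {..<d} (\<lambda>_. {0..<L})"
  proof
    fix z assume "z \<in> \<phi> ` Cb h"
    then obtain y where y: "y \<in> Cb h" "z = \<phi> y" by auto
    have "nat (y i - lo i) < L" if i: "i < d" for i
    proof -
      have "\<bar>y i - ctr h i\<bar> \<le> int rad" using y(1) i unfolding Cb_def by blast
      hence "0 \<le> y i - lo i" "y i - lo i < int L" unfolding lo_def using two_rad by linarith+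
      thus ?thesis by (simp add: nat_less_iff)
    qed
    thus "z \<in> PiE {..<d} (\<lambda>_. {0..<L})" unfolding y(2) \<phi>_def by auto
  qed
  have inj: "inj_on \<phi> (Cb h)"
  proof (rule inj_onI)
    fix y y' assume y: "y \<in> Cb h" and y': "y' \<in> Cb h" and e: "\<phi> y = \<phi> y'"
    show "y = y'"
    proof
      fix i
      show "y i = y' i"
      proof (cases "i < d")
        case True
        have "\<phi> y i = \<phi> y' i" using e by simp
        hence "nat (y i - lo i) = nat (y' i - lo i)" using True unfolding \<phi>_def by simp
        moreover have "\<bar>y i - ctr h i\<bar> \<le> int rad" "\<bar>y' i - ctr h i\<bar> \<le> int rad"
          using y y' True unfolding Cb_def by blast+
        hence "y i - lo i \<ge> 0" "y' i - lo i \<ge> 0" unfolding lo_def by linarith+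
        ultimately show ?thesis by simp
      next
        case False
        have "y \<in> V" "y' \<in> V" using y y' Cb_sub BV by auto
        moreover have "d \<le> i" using False by simp
        ultimately show ?thesis using Vz by metis
      qed
    qed
  qed
  have "card (Cb h) = card (\<phi> ` Cb h)" using inj by (simp add: card_image)
  also have "\<dots> \<le> card (PiE {..<d} (\<lambda>_. {0..<L}))" by (rule card_mono[OF _ maps]) (simp add: finite_PiE)
  also have "\<dots> = L ^ d" by (simp add: card_PiE)
  finally show ?thesis .
qed

lemma adj_form:
  assumes u: "u \<in> V" and w: "w \<in> V" and a: "adj d u w"
  shows "\<exists>i<d. \<exists>s\<in>{-1,1}. w = u(i := u i + s)"
proof -
  let ?t = "\<lambda>j. \<bar>u j - w j\<bar>"
  have sum1: "(\<Sum>j<d. ?t j) = 1" using a unfolding adj_def .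
  obtain i where i: "i < d" "?t i \<noteq> 0"
  proof (rule ccontr)
    assume "\<not> thesis"
    hence "\<forall>j<d. ?t j = 0" using that by blast
    hence "(\<Sum>j<d. ?t j) = 0" by simp
    thus False using sum1 by simp
  qed
  have ti: "?t i = 1" using adj_coord[OF a i(1)] i(2) by linarith
  have rest: "(\<Sum>j\<in>{..<d} - {i}. ?t j) = 0"
    using sum1 ti i(1) by (simp add: sum_diff1)
  have z: "?t j = 0" if "j < d" "j \<noteq> i" for j
    using rest that by (subst (asm) sum_nonneg_eq_0_iff) auto
  define s where "s = w i - u i"
  have s: "s \<in> {-1,1}" using ti unfolding s_def by (auto simp: abs_if split: if_splits)
  have "w = u(i := u i + s)"
  proof
    fix j show "w j = (u(i := u i + s)) j"
    proof (cases "j = i")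
      case False
      show ?thesis
      proof (cases "j < d")
        case True thus ?thesis using z[OF True False] False by simp
      next
        case False2: False
        hence "d \<le> j" by simp
        hence "w j = 0" "u j = 0" using Vz u w by metis+
        thus ?thesis using False by simp
      qed
    qed (simp add: s_def)
  qed
  thus ?thesis using i(1) s by blast
qed

lemma deg_bound:
  assumes u: "u \<in> V"
  shows "card {e \<in> E. u \<in> e} \<le> 2 * d"
proof -
  have "{e \<in> E. u \<in> e} \<subseteq> (\<lambda>(i,s). {u, u(i := u i + s)}) ` ({..<d} \<times> {-1,1})"
  proof
    fix e assume "e \<in> {e \<in> E. u \<in> e}"
    then obtain a b where e: "e = {a,b}" "a \<in> V" "b \<in> V" "adj d a b" "u \<in> e" unfolding edges_def by auto
    obtain w where w: "w \<in> V" "adj d u w" "e = {u,w}"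
      using e adj_sym by (cases "u = a") auto
    from adj_form[OF u w(1,2)] obtain i s where "i < d" "s \<in> {-1,1}" "w = u(i := u i + s)" by blast
    thus "e \<in> (\<lambda>(i,s). {u, u(i := u i + s)}) ` ({..<d} \<times> {-1,1})" using w(3) by auto
  qed
  hence "card {e \<in> E. u \<in> e} \<le> card ((\<lambda>(i,s). {u, u(i := u i + s)}) ` ({..<d} \<times> {-1::int,1}))"
    by (rule card_mono[rotated]) auto
  also have "\<dots> \<le> card ({..<d} \<times> {-1::int,1})" by (rule card_image_le) auto
  also have "\<dots> = 2 * d" by (simp add: card_cartesian_product)
  finally show ?thesis .
qed

definition "EC h = {e \<in> E. \<exists>u\<in>e. u \<in> Cb h}"

lemma card_EC: "card (EC h) \<le> 2 * d * L ^ d"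
proof -
  have "EC h \<subseteq> (\<Union>u\<in>Cb h. {e \<in> E. u \<in> e})" unfolding EC_def by auto
  hence "card (EC h) \<le> card (\<Union>u\<in>Cb h. {e \<in> E. u \<in> e})"
    by (rule card_mono[rotated]) (rule finite_subset[OF _ finE], auto)
  also have "\<dots> \<le> (\<Sum>u\<in>Cb h. card {e \<in> E. u \<in> e})" by (rule card_UN_le) (use finB Cb_sub finite_subset in blast)
  also have "\<dots> \<le> (\<Sum>u\<in>Cb h. 2 * d)" by (intro sum_mono deg_bound) (use Cb_sub BV in auto)
  also have "\<dots> = card (Cb h) * (2 * d)" by simp
  also have "\<dots> \<le> L ^ d * (2 * d)" using card_Cb by (intro mult_right_mono) auto
  finally show ?thesis by (simp add: mult.commute)
qed

end


lemma mix_bound: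
  fixes w F :: "'a \<Rightarrow> real"
  assumes fin: "finite I" and i0: "i0 \<in> I" and wn: "\<And>i. i \<in> I \<Longrightarrow> 0 \<le> w i"
    and ws: "(\<Sum>i\<in>I. w i) = 1" and we: "e \<le> w i0" and e0: "0 \<le> e"
    and Fb: "\<And>i. i \<in> I \<Longrightarrow> lo \<le> F i \<and> F i \<le> lo + l"
  shows "(1 - e) * lo \<le> (\<Sum>i\<in>I. w i * F i) - e * F i0 \<and> (\<Sum>i\<in>I. w i * F i) - e * F i0 \<le> (1 - e) * (lo + l)"
proof -
  define w' where "w' i = w i - (if i = i0 then e else 0)" for i
  have w'n: "0 \<le> w' i" if "i \<in> I" for i using wn[OF that] we unfolding w'_def by auto
  have "(\<Sum>i\<in>I. w' i) = (\<Sum>i\<in>I. w i) - (\<Sum>i\<in>I. (if i = i0 then e else 0))"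
    unfolding w'_def by (simp add: sum_subtractf)
  hence w's: "(\<Sum>i\<in>I. w' i) = 1 - e" using ws fin i0 by simp
  have "(\<Sum>i\<in>I. w' i * F i) = (\<Sum>i\<in>I. w i * F i - (if i = i0 then e * F i else 0))"
    by (intro sum.cong refl) (simp add: w'_def algebra_simps)
  also have "\<dots> = (\<Sum>i\<in>I. w i * F i) - (\<Sum>i\<in>I. (if i = i0 then e * F i else 0))"
    by (rule sum_subtractf)
  finally have "(\<Sum>i\<in>I. w' i * F i) = (\<Sum>i\<in>I. w i * F i) - (\<Sum>i\<in>I. (if i = i0 then e * F i else 0))" .
  hence eq: "(\<Sum>i\<in>I. w' i * F i) = (\<Sum>i\<in>I. w i * F i) - e * F i0" using fin i0 by simp
  have "(\<Sum>i\<in>I. w' i * lo) \<le> (\<Sum>i\<in>I. w' i * F i)"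
    by (intro sum_mono mult_left_mono) (use Fb w'n in auto)
  moreover have "(\<Sum>i\<in>I. w' i * F i) \<le> (\<Sum>i\<in>I. w' i * (lo + l))"
    by (intro sum_mono mult_left_mono) (use Fb w'n in auto)
  moreover have "(\<Sum>i\<in>I. w' i * lo) = (1 - e) * lo" using w's by (simp add: sum_distrib_right[symmetric])
  moreover have "(\<Sum>i\<in>I. w' i * (lo + l)) = (1 - e) * (lo + l)" using w's by (simp add: sum_distrib_right[symmetric])
  ultimately show ?thesis using eq by simp
qed

context potts
begin

definition "Nb = {(\<sigma>1,\<sigma>2). \<sigma>1 \<in> S \<and> \<sigma>2 \<in> S \<and> (\<exists>h. \<forall>v\<in>B. v \<notin> Cb h \<longrightarrow> \<sigma>1 v = \<sigma>2 v)}"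
definition lip :: "(config \<Rightarrow> real) \<Rightarrow> real" where "lip f = Max ((\<lambda>(a,b). \<bar>f a - f b\<bar>) ` Nb)"
definition Pf :: "(config \<Rightarrow> real) \<Rightarrow> config \<Rightarrow> real" where "Pf f \<sigma> = (\<Sum>\<sigma>'\<in>S. Pk \<sigma> \<sigma>' * f \<sigma>')"

lemma S_ne: "S \<noteq> {}"
proof -
  have "(\<lambda>v. if v \<in> B then 1 else 0) \<in> S" using q2 by (auto simp: configs_def)
  thus ?thesis by auto
qed

lemma finNb: "finite Nb"
  by (rule finite_subset[of _ "S \<times> S"]) (auto simp: Nb_def finS)

lemma Nb_ne: "Nb \<noteq> {}"
proof -
  obtain s where "s \<in> S" using S_ne by auto
  hence "(s,s) \<in> Nb" unfolding Nb_def by auto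
  thus ?thesis by auto
qed

lemma lip_ge: "(a,b) \<in> Nb \<Longrightarrow> \<bar>f a - f b\<bar> \<le> lip f"
  unfolding lip_def by (rule Max_ge) (use finNb in auto)

lemma lip_attained: "\<exists>(a,b)\<in>Nb. lip f = \<bar>f a - f b\<bar>"
proof -
  have "lip f \<in> (\<lambda>(a,b). \<bar>f a - f b\<bar>) ` Nb" unfolding lip_def
    by (rule Max_in) (use finNb Nb_ne in auto)
  thus ?thesis by auto
qed

lemma connect:
  assumes z: "\<And>a b. (a,b) \<in> Nb \<Longrightarrow> f a = f b"
  shows "a \<in> S \<Longrightarrow> b \<in> S \<Longrightarrow> f a = f b"
proof (induct "card {v\<in>B. a v \<noteq> b v}" arbitrary: a rule: less_induct)
  case less
  show ?case
  proof (cases "{v\<in>B. a v \<noteq> b v} = {}")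
    case True
    have "a = b"
    proof
      fix u show "a u = b u" by (cases "u \<in> B") (use True less(2,3) in \<open>auto simp: configs_def\<close>)
    qed
    thus ?thesis by simp
  next
    case False
    then obtain v where v: "v \<in> B" "a v \<noteq> b v" by auto
    obtain h where h: "v \<in> Cb h" using B_cover[OF v(1)] by auto
    define a' where "a' u = (if u \<in> Cb h then b u else a u)" for u
    have a'S: "a' \<in> S" using less(2,3) Cb_sub unfolding a'_def configs_def by auto
    have "(a,a') \<in> Nb" unfolding Nb_def using less(2) a'S by (auto simp: a'_def)
    hence e1: "f a = f a'" by (rule z)
    have sub: "{u\<in>B. a' u \<noteq> b u} \<subset> {u\<in>B. a u \<noteq> b u}"
    proof
      show "{u\<in>B. a' u \<noteq> b u} \<subseteq> {u\<in>B. a u \<noteq> b u}" unfolding a'_def by auto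
      show "{u\<in>B. a' u \<noteq> b u} \<noteq> {u\<in>B. a u \<noteq> b u}" using v h unfolding a'_def by auto
    qed
    have "card {u\<in>B. a' u \<noteq> b u} < card {u\<in>B. a u \<noteq> b u}"
      by (rule psubset_card_mono) (use finB sub in auto)
    hence "f a' = f b" using less(1) a'S less(3) by blast
    thus ?thesis using e1 by simp
  qed
qed

definition "Rg h = B - Cb h"
definition Fv :: "(config \<Rightarrow> real) \<Rightarrow> config \<Rightarrow> vtx set set \<Rightarrow> real" where "Fv f \<sigma> A = (\<Sum>\<sigma>'\<in>S. Kr \<sigma> A \<sigma>' * f \<sigma>')"
definition hm :: "(config \<Rightarrow> real) \<Rightarrow> vtx \<Rightarrow> config \<Rightarrow> real" where "hm f h \<sigma>' = Min (f ` {\<rho>\<in>S. \<forall>v\<in>Rg h. \<rho> v = \<sigma>' v})"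
definition "KR h \<sigma> A \<rho> = (if \<forall>v\<in>Rg h \<inter> \<Union>A. \<rho> v = \<sigma> v then (1/real q) ^ card (Rg h - \<Union>A) else 0)"

lemma marg:
  assumes s: "\<sigma> \<in> S" and g: "\<And>\<sigma>'. g \<sigma>' = g (restr \<sigma>' (Rg h))"
  shows "(\<Sum>\<sigma>'\<in>S. Kr \<sigma> A \<sigma>' * g \<sigma>') = (\<Sum>\<rho>\<in>configs (Rg h) q. KR h \<sigma> A \<rho> * g \<rho>)"
proof -
  let ?C = "Cb h" and ?R = "Rg h"
  define KC where "KC \<kappa> = (if \<forall>v\<in>?C \<inter> \<Union>A. \<kappa> v = \<sigma> v then (1/real q) ^ card (?C - \<Union>A) else 0)" for \<kappa> :: config
  have BU: "B = ?C \<union> ?R" unfolding Rg_def using Cb_sub by auto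
  have dj: "?C \<inter> ?R = {}" unfolding Rg_def by auto
  have finC: "finite ?C" using finB Cb_sub finite_subset by blast
  have finR: "finite ?R" using finB unfolding Rg_def by auto
  have "(\<Sum>\<sigma>'\<in>S. Kr \<sigma> A \<sigma>' * g \<sigma>') = (\<Sum>\<sigma>'\<in>configs (?C \<union> ?R) q. Kr \<sigma> A \<sigma>' * g \<sigma>')"
    using BU by simp
  also have "\<dots> = (\<Sum>\<kappa>\<in>configs ?C q. \<Sum>\<rho>\<in>configs ?R q. Kr \<sigma> A (cfadd \<kappa> \<rho>) * g (cfadd \<kappa> \<rho>))"
    by (rule sum_configs_split[OF dj])
  also have "\<dots> = (\<Sum>\<kappa>\<in>configs ?C q. \<Sum>\<rho>\<in>configs ?R q. KC \<kappa> * (KR h \<sigma> A \<rho> * g \<rho>))"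
  proof (intro sum.cong refl)
    fix \<kappa> \<rho> assume k: "\<kappa> \<in> configs ?C q" and r: "\<rho> \<in> configs ?R q"
    have kz: "\<kappa> v = 0" if "v \<notin> ?C" for v using k that unfolding configs_def by auto
    have rz: "\<rho> v = 0" if "v \<notin> ?R" for v using r that unfolding configs_def by auto
    have rr: "restr (cfadd \<kappa> \<rho>) ?R = \<rho>"
    proof
      fix v show "restr (cfadd \<kappa> \<rho>) ?R v = \<rho> v"
        using kz[of v] rz[of v] dj unfolding restr_def cfadd_def by auto
    qed
    have g1: "g (cfadd \<kappa> \<rho>) = g \<rho>" using g[of "cfadd \<kappa> \<rho>"] rr by simp
    have ag: "agr \<sigma> A (cfadd \<kappa> \<rho>) \<longleftrightarrow> (\<forall>v\<in>?C \<inter> \<Union>A. \<kappa> v = \<sigma> v) \<and> (\<forall>v\<in>?R \<inter> \<Union>A. \<rho> v = \<sigma> v)"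
    proof -
      have c1: "cfadd \<kappa> \<rho> v = \<kappa> v" if "v \<in> ?C" for v using that dj rz[of v] unfolding cfadd_def by auto
      have c2: "cfadd \<kappa> \<rho> v = \<rho> v" if "v \<in> ?R" for v using that dj kz[of v] unfolding cfadd_def by auto
      show ?thesis unfolding agr_def using BU c1 c2 by auto
    qed
    have cd: "card {v\<in>B. v \<notin> \<Union>A} = card (?C - \<Union>A) + card (?R - \<Union>A)"
    proof -
      have "{v\<in>B. v \<notin> \<Union>A} = (?C - \<Union>A) \<union> (?R - \<Union>A)" using BU by auto
      thus ?thesis using finC finR dj by (simp add: card_Un_disjoint Int_Diff Diff_Int_distrib2 disjoint_iff)
    qed
    show "Kr \<sigma> A (cfadd \<kappa> \<rho>) * g (cfadd \<kappa> \<rho>) = KC \<kappa> * (KR h \<sigma> A \<rho> * g \<rho>)"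
      unfolding Kr_def KC_def KR_def ag cd g1 by (simp add: power_add)
  qed
  also have "\<dots> = (\<Sum>\<kappa>\<in>configs ?C q. KC \<kappa>) * (\<Sum>\<rho>\<in>configs ?R q. KR h \<sigma> A \<rho> * g \<rho>)"
    by (rule sum_product[symmetric])
  also have "(\<Sum>\<kappa>\<in>configs ?C q. KC \<kappa>) = 1"
  proof -
    have "(\<Sum>\<kappa>\<in>configs ?C q. KC \<kappa>) = (1/real q) ^ card (?C - ?C \<inter> \<Union>A) * real q ^ card (?C - ?C \<inter> \<Union>A)"
    proof -
      have cs: "?C - \<Union>A = ?C - ?C \<inter> \<Union>A" by auto
      show ?thesis unfolding KC_def cs by (rule sum_agree) (use finC s Cb_sub in \<open>auto simp: configs_def\<close>)
    qed
    also have "\<dots> = 1" using q2 by (simp add: power_mult_distrib[symmetric])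
    finally show ?thesis .
  qed
  finally show ?thesis by simp
qed

lemma hm_restr: "hm f h \<sigma>' = hm f h (restr \<sigma>' (Rg h))"
  unfolding hm_def restr_def by simp

lemma hm_bounds:
  assumes s: "\<sigma>' \<in> S"
  shows "hm f h \<sigma>' \<le> f \<sigma>' \<and> f \<sigma>' \<le> hm f h \<sigma>' + lip f"
proof -
  define T where "T = {\<rho>\<in>S. \<forall>v\<in>Rg h. \<rho> v = \<sigma>' v}"
  have fT: "finite T" unfolding T_def using finS by auto
  have sT: "\<sigma>' \<in> T" unfolding T_def using s by auto
  have "hm f h \<sigma>' \<le> f \<sigma>'" unfolding hm_def T_def[symmetric] by (rule Min_le) (use fT sT in auto)
  moreover have "hm f h \<sigma>' \<in> f ` T" unfolding hm_def T_def[symmetric] by (rule Min_in) (use fT sT in auto)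
  then obtain \<rho> where r: "\<rho> \<in> T" "hm f h \<sigma>' = f \<rho>" by auto
  have "(\<rho>, \<sigma>') \<in> Nb" unfolding Nb_def using r(1) s unfolding T_def Rg_def by auto
  hence "\<bar>f \<rho> - f \<sigma>'\<bar> \<le> lip f" by (rule lip_ge)
  hence "f \<sigma>' \<le> f \<rho> + lip f" by linarith
  hence "f \<sigma>' \<le> hm f h \<sigma>' + lip f" using r(2) by simp
  ultimately show ?thesis by simp
qed

lemma F_bounds:
  assumes s: "\<sigma> \<in> S"
  shows "Fv (hm f h) \<sigma> A \<le> Fv f \<sigma> A \<and> Fv f \<sigma> A \<le> Fv (hm f h) \<sigma> A + lip f"
proof -
  have "Fv (hm f h) \<sigma> A \<le> Fv f \<sigma> A" unfolding Fv_def
    by (intro sum_mono mult_left_mono) (use hm_bounds Kr_nonneg in auto)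
  moreover have "Fv f \<sigma> A \<le> (\<Sum>\<sigma>'\<in>S. Kr \<sigma> A \<sigma>' * (hm f h \<sigma>' + lip f))" unfolding Fv_def
    by (intro sum_mono mult_left_mono) (use hm_bounds Kr_nonneg in auto)
  moreover have "(\<Sum>\<sigma>'\<in>S. Kr \<sigma> A \<sigma>' * (hm f h \<sigma>' + lip f)) = Fv (hm f h) \<sigma> A + lip f"
  proof -
    have "(\<Sum>\<sigma>'\<in>S. Kr \<sigma> A \<sigma>' * (hm f h \<sigma>' + lip f)) = (\<Sum>\<sigma>'\<in>S. Kr \<sigma> A \<sigma>' * hm f h \<sigma>') + (\<Sum>\<sigma>'\<in>S. Kr \<sigma> A \<sigma>') * lip f"
      by (simp add: distrib_left sum.distrib sum_distrib_right)
    thus ?thesis unfolding Fv_def using Kr_sum[OF s] by simp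
  qed
  ultimately show ?thesis by simp
qed

lemma H_same:
  assumes sa: "\<sigma>a \<in> S" and sb: "\<sigma>b \<in> S" and ag: "\<forall>v\<in>Rg h. \<sigma>a v = \<sigma>b v"
    and AA: "Rg h \<inter> \<Union>A = Rg h \<inter> \<Union>A'"
  shows "Fv (hm f h) \<sigma>a A = Fv (hm f h) \<sigma>b A'"
proof -
  have "Fv (hm f h) \<sigma>a A = (\<Sum>\<rho>\<in>configs (Rg h) q. KR h \<sigma>a A \<rho> * hm f h \<rho>)"
    unfolding Fv_def by (rule marg[OF sa]) (rule hm_restr)
  also have "\<dots> = (\<Sum>\<rho>\<in>configs (Rg h) q. KR h \<sigma>b A' \<rho> * hm f h \<rho>)"
  proof (intro sum.cong refl)
    fix \<rho>
    have c: "Rg h - \<Union>A = Rg h - \<Union>A'" using AA by auto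
    have "(\<forall>v\<in>Rg h \<inter> \<Union>A. \<rho> v = \<sigma>a v) \<longleftrightarrow> (\<forall>v\<in>Rg h \<inter> \<Union>A'. \<rho> v = \<sigma>b v)"
      using AA ag by auto
    thus "KR h \<sigma>a A \<rho> * hm f h \<rho> = KR h \<sigma>b A' \<rho> * hm f h \<rho>" unfolding KR_def c by simp
  qed
  also have "\<dots> = Fv (hm f h) \<sigma>b A'"
    unfolding Fv_def by (rule marg[OF sb, symmetric]) (rule hm_restr)
  finally show ?thesis .
qed

lemma EC_R: "e \<in> EC h \<Longrightarrow> Rg h \<inter> e = {}"
proof -
  assume e: "e \<in> EC h"
  then obtain u where u: "u \<in> e" "u \<in> Cb h" unfolding EC_def by auto
  obtain a b where ab: "e = {a,b}" "adj d a b" using e unfolding EC_def edges_def by auto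
  have "w \<notin> Rg h" if w: "w \<in> e" for w
  proof (cases "w \<in> B")
    case True
    have "w = u \<or> adj d u w" using ab u(1) w adj_sym by auto
    thus ?thesis using sep[OF u(2) True] u(2) unfolding Rg_def by auto
  qed (simp add: Rg_def)
  thus ?thesis by auto
qed

lemma glue_eqv:
  assumes "e \<in> E" "\<forall>u\<in>e. glue B \<sigma>1 \<tau> u = glue B \<sigma>2 \<tau> u"
  shows "e \<in> Mo \<sigma>1 \<longleftrightarrow> e \<in> Mo \<sigma>2"
proof -
  have "\<forall>u v. e = {u,v} \<longrightarrow> (glue B \<sigma>1 \<tau> u = glue B \<sigma>1 \<tau> v \<longleftrightarrow> glue B \<sigma>2 \<tau> u = glue B \<sigma>2 \<tau> v)"
    using assms(2) by auto
  thus ?thesis using assms(1) unfolding Mo_def mono_edges_def by blast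
qed

lemma Pf_split:
  "Pf f \<sigma> = (\<Sum>A\<in>Pow (Mo \<sigma>). Wt p (Mo \<sigma>) A * Fv f \<sigma> A)"
proof -
  have "Pf f \<sigma> = (\<Sum>\<sigma>'\<in>S. \<Sum>A\<in>Pow (Mo \<sigma>). Wt p (Mo \<sigma>) A * (Kr \<sigma> A \<sigma>' * f \<sigma>'))"
    unfolding Pf_def Pk_eq by (simp add: sum_distrib_right mult.assoc)
  also have "\<dots> = (\<Sum>A\<in>Pow (Mo \<sigma>). \<Sum>\<sigma>'\<in>S. Wt p (Mo \<sigma>) A * (Kr \<sigma> A \<sigma>' * f \<sigma>'))"
    by (rule sum.swap)
  also have "\<dots> = (\<Sum>A\<in>Pow (Mo \<sigma>). Wt p (Mo \<sigma>) A * Fv f \<sigma> A)"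
    unfolding Fv_def by (simp add: sum_distrib_left)
  finally show ?thesis .
qed

lemma contr:
  fixes f :: "config \<Rightarrow> real"
  assumes s1: "\<sigma>1 \<in> S" and s2: "\<sigma>2 \<in> S" and ag: "\<forall>v\<in>B. v \<notin> Cb h \<longrightarrow> \<sigma>1 v = \<sigma>2 v"
  shows "\<bar>Pf f \<sigma>1 - Pf f \<sigma>2\<bar> \<le> (1 - (1-p)^(2*d*L^d)) * lip f"
proof -
  define \<epsilon> where "\<epsilon> = (1-p)^(2*d*L^d)"
  define M0 where "M0 = Mo \<sigma>1 - EC h"
  define G where "G s A1 = (\<Sum>A2\<in>Pow (Mo s \<inter> EC h). Wt p (Mo s \<inter> EC h) A2 * Fv f s (A1 \<union> A2))" for s A1
  have gl: "glue B \<sigma>1 \<tau> u = glue B \<sigma>2 \<tau> u" if "u \<notin> Cb h" for u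
    using ag that unfolding glue_def by auto
  have offE: "u \<notin> Cb h" if "e \<in> E - EC h" "u \<in> e" for e u
    using that unfolding EC_def by auto
  have M0': "Mo \<sigma>2 - EC h = M0"
  proof -
    have "e \<in> Mo \<sigma>1 \<longleftrightarrow> e \<in> Mo \<sigma>2" if "e \<in> E - EC h" for e
      by (rule glue_eqv) (use that gl offE in auto)
    thus ?thesis unfolding M0_def using Mo_sub by blast
  qed
  have M0E: "M0 \<subseteq> E - EC h" unfolding M0_def using Mo_sub by auto
  have finM0: "finite M0" unfolding M0_def using finMo by auto
  have PfG: "Pf f s = (\<Sum>A1\<in>Pow M0. Wt p M0 A1 * G s A1)" if s: "s = \<sigma>1 \<or> s = \<sigma>2" for s
  proof -
    have M0s: "Mo s - EC h = M0" using s M0' unfolding M0_def by auto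
    have dec: "Mo s = M0 \<union> (Mo s \<inter> EC h)" using M0s by auto
    have dj: "M0 \<inter> (Mo s \<inter> EC h) = {}" using M0s by auto
    have fin2: "finite (Mo s \<inter> EC h)" using finMo by auto
    have "Pf f s = (\<Sum>A\<in>Pow (M0 \<union> (Mo s \<inter> EC h)). Wt p (M0 \<union> (Mo s \<inter> EC h)) A * Fv f s A)"
      using Pf_split[of f s] dec by simp
    also have "\<dots> = (\<Sum>A1\<in>Pow M0. \<Sum>A2\<in>Pow (Mo s \<inter> EC h). Wt p (M0 \<union> (Mo s \<inter> EC h)) (A1 \<union> A2) * Fv f s (A1 \<union> A2))"
      by (rule sum_Pow_split[OF dj])
    also have "\<dots> = (\<Sum>A1\<in>Pow M0. \<Sum>A2\<in>Pow (Mo s \<inter> EC h). Wt p M0 A1 * (Wt p (Mo s \<inter> EC h) A2 * Fv f s (A1 \<union> A2)))"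
      by (intro sum.cong refl) (subst Wt_mult[OF finM0 fin2 dj], auto)
    also have "\<dots> = (\<Sum>A1\<in>Pow M0. Wt p M0 A1 * G s A1)"
      unfolding G_def by (simp add: sum_distrib_left)
    finally show ?thesis .
  qed
  have agR: "\<forall>v\<in>Rg h. \<sigma>1 v = \<sigma>2 v" using ag unfolding Rg_def by auto
  have eps0: "0 \<le> \<epsilon>" unfolding \<epsilon>_def using p01 by simp
  have Gb: "\<bar>G \<sigma>1 A1 - G \<sigma>2 A1\<bar> \<le> (1 - \<epsilon>) * lip f" if A1: "A1 \<in> Pow M0" for A1
  proof -
    define Hc where "Hc = Fv (hm f h) \<sigma>1 A1"
    have RA: "Rg h \<inter> \<Union>(A1 \<union> A2) = Rg h \<inter> \<Union>A1" if "A2 \<subseteq> EC h" for A2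
      using that EC_R by blast
    have F0: "Fv f \<sigma>1 A1 = Fv f \<sigma>2 A1"
    proof -
      have "agr \<sigma>1 A1 \<sigma>' \<longleftrightarrow> agr \<sigma>2 A1 \<sigma>'" for \<sigma>'
      proof -
        have "\<sigma>1 v = \<sigma>2 v" if vv: "v \<in> B" "v \<in> \<Union>A1" for v
        proof -
          obtain e where "e \<in> A1" "v \<in> e" using vv by auto
          hence "v \<notin> Cb h" using offE A1 M0E by blast
          thus ?thesis using ag vv by auto
        qed
        thus ?thesis unfolding agr_def by auto
      qed
      thus ?thesis unfolding Fv_def Kr_def by simp
    qed
    have mb: "(1 - \<epsilon>) * Hc \<le> G s A1 - \<epsilon> * Fv f \<sigma>1 A1 \<and> G s A1 - \<epsilon> * Fv f \<sigma>1 A1 \<le> (1 - \<epsilon>) * (Hc + lip f)"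
      if s: "s = \<sigma>1 \<or> s = \<sigma>2" for s
    proof -
      have sS: "s \<in> S" using s s1 s2 by auto
      have fin2: "finite (Mo s \<inter> EC h)" using finMo by auto
      have F0s: "Fv f s (A1 \<union> {}) = Fv f \<sigma>1 A1" using s F0 by auto
      have "(1 - \<epsilon>) * Hc \<le> (\<Sum>A2\<in>Pow (Mo s \<inter> EC h). Wt p (Mo s \<inter> EC h) A2 * Fv f s (A1 \<union> A2)) - \<epsilon> * Fv f s (A1 \<union> {}) \<and>
            (\<Sum>A2\<in>Pow (Mo s \<inter> EC h). Wt p (Mo s \<inter> EC h) A2 * Fv f s (A1 \<union> A2)) - \<epsilon> * Fv f s (A1 \<union> {}) \<le> (1 - \<epsilon>) * (Hc + lip f)"
      proof (rule mix_bound)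
        show "finite (Pow (Mo s \<inter> EC h))" using fin2 by (simp only: finite_Pow_iff)
        show "{} \<in> Pow (Mo s \<inter> EC h)" by simp
        show "\<And>i. i \<in> Pow (Mo s \<inter> EC h) \<Longrightarrow> 0 \<le> Wt p (Mo s \<inter> EC h) i" using p01 by (intro Wt_nonneg) auto
        show "(\<Sum>i\<in>Pow (Mo s \<inter> EC h). Wt p (Mo s \<inter> EC h) i) = 1" by (rule Wt_sum[OF fin2])
        show "\<epsilon> \<le> Wt p (Mo s \<inter> EC h) {}"
        proof -
          have "card (Mo s \<inter> EC h) \<le> card (EC h)" by (rule card_mono) (use finE in \<open>auto simp: EC_def\<close>)
          hence c: "card (Mo s \<inter> EC h) \<le> 2*d*L^d" using card_EC[of h] by linarith
          have "(1-p)^(2*d*L^d) \<le> (1-p)^card (Mo s \<inter> EC h)" by (rule power_decreasing[OF c]) (use p01 bpos in auto)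
          thus ?thesis unfolding \<epsilon>_def Wt_def by simp
        qed
        show "0 \<le> \<epsilon>" by (rule eps0)
        fix A2 assume A2: "A2 \<in> Pow (Mo s \<inter> EC h)"
        have "Fv (hm f h) s (A1 \<union> A2) = Hc" unfolding Hc_def
        proof (rule H_same)
          show "\<forall>v\<in>Rg h. s v = \<sigma>1 v" using s agR by auto
        qed (use sS s1 RA A2 in auto)
        thus "Hc \<le> Fv f s (A1 \<union> A2) \<and> Fv f s (A1 \<union> A2) \<le> Hc + lip f" using F_bounds[OF sS, of f h "A1 \<union> A2"] by simp
      qed
      thus ?thesis unfolding G_def F0s .
    qed
    have dd: "(1 - \<epsilon>) * (Hc + lip f) = (1 - \<epsilon>) * Hc + (1 - \<epsilon>) * lip f" by (simp add: distrib_left)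
    from mb[of \<sigma>1] mb[of \<sigma>2] dd have "G \<sigma>1 A1 - G \<sigma>2 A1 \<le> (1 - \<epsilon>) * lip f" "G \<sigma>2 A1 - G \<sigma>1 A1 \<le> (1 - \<epsilon>) * lip f"
      by auto
    thus ?thesis by (simp add: abs_le_iff)
  qed
  have "Pf f \<sigma>1 - Pf f \<sigma>2 = (\<Sum>A1\<in>Pow M0. Wt p M0 A1 * (G \<sigma>1 A1 - G \<sigma>2 A1))"
    using PfG[of \<sigma>1] PfG[of \<sigma>2] by (simp add: sum_subtractf algebra_simps)
  hence "\<bar>Pf f \<sigma>1 - Pf f \<sigma>2\<bar> \<le> (\<Sum>A1\<in>Pow M0. \<bar>Wt p M0 A1 * (G \<sigma>1 A1 - G \<sigma>2 A1)\<bar>)"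
    by (simp add: sum_abs)
  also have "\<dots> \<le> (\<Sum>A1\<in>Pow M0. Wt p M0 A1 * ((1 - \<epsilon>) * lip f))"
  proof (rule sum_mono)
    fix A1 assume A1: "A1 \<in> Pow M0"
    have w: "0 \<le> Wt p M0 A1" using p01 by (intro Wt_nonneg) auto
    show "\<bar>Wt p M0 A1 * (G \<sigma>1 A1 - G \<sigma>2 A1)\<bar> \<le> Wt p M0 A1 * ((1 - \<epsilon>) * lip f)"
      unfolding abs_mult using w Gb[OF A1] by (simp add: mult_left_mono)
  qed
  also have "\<dots> = (1 - \<epsilon>) * lip f" using Wt_sum[OF finM0, of p] by (simp add: sum_distrib_right[symmetric])
  finally show ?thesis unfolding \<epsilon>_def .
qed

lemma eig_props:
  fixes f :: "config \<Rightarrow> real"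
  assumes ev: "\<And>\<sigma>. \<sigma> \<in> S \<Longrightarrow> Pf f \<sigma> = l * f \<sigma>"
  shows "(l = 1 \<longrightarrow> (\<forall>a\<in>S. \<forall>b\<in>S. f a = f b)) \<and>
         (l \<noteq> 1 \<longrightarrow> (\<exists>\<sigma>\<in>S. f \<sigma> \<noteq> 0) \<longrightarrow> \<bar>l\<bar> \<le> 1 - (1-p)^(2*d*L^d))"
proof -
  define \<epsilon> where "\<epsilon> = (1-p)^(2*d*L^d)"
  have epos: "\<epsilon> > 0" unfolding \<epsilon>_def using p01 by simp
  obtain a b where ab: "(a,b) \<in> Nb" "lip f = \<bar>f a - f b\<bar>" using lip_attained[of f] by auto
  from ab(1) obtain h where a: "a \<in> S" and b: "b \<in> S" and h: "\<forall>v\<in>B. v \<notin> Cb h \<longrightarrow> a v = b v"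
    unfolding Nb_def by auto
  have "l * f a - l * f b = l * (f a - f b)" by (simp add: right_diff_distrib)
  hence "\<bar>l\<bar> * lip f = \<bar>Pf f a - Pf f b\<bar>" unfolding ab(2) ev[OF a] ev[OF b]
    by (simp only: abs_mult)
  also have "\<dots> \<le> (1 - \<epsilon>) * lip f" unfolding \<epsilon>_def by (rule contr[OF a b h])
  finally have key: "\<bar>l\<bar> * lip f \<le> (1 - \<epsilon>) * lip f" .
  have lip0: "lip f \<ge> 0" using ab(2) by simp
  have const: "\<forall>a\<in>S. \<forall>b\<in>S. f a = f b" if "lip f = 0"
  proof (intro ballI)
    fix a b assume "a \<in> S" "b \<in> S"
    show "f a = f b"
    proof (rule connect[OF _ \<open>a \<in> S\<close> \<open>b \<in> S\<close>])
      fix x y assume "(x,y) \<in> Nb"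
      hence "\<bar>f x - f y\<bar> \<le> lip f" by (rule lip_ge)
      thus "f x = f y" using that by simp
    qed
  qed
  have i0: "l = 1 \<longrightarrow> lip f = 0"
  proof
    assume "l = 1"
    hence "1 * lip f \<le> (1 - \<epsilon>) * lip f" using key by simp
    hence "\<epsilon> * lip f \<le> 0" by (simp add: algebra_simps)
    show "lip f = 0"
    proof (rule ccontr)
      assume "lip f \<noteq> 0"
      hence "lip f > 0" using lip0 by simp
      hence "\<epsilon> * lip f > 0" using epos by simp
      thus False using \<open>\<epsilon> * lip f \<le> 0\<close> by simp
    qed
  qed
  have i: "l = 1 \<longrightarrow> (\<forall>a\<in>S. \<forall>b\<in>S. f a = f b)"
  proof
    assume "l = 1"
    hence "lip f = 0" using i0 by simp
    thus "\<forall>a\<in>S. \<forall>b\<in>S. f a = f b" by (rule const)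
  qed
  have ii: "l \<noteq> 1 \<longrightarrow> (\<exists>\<sigma>\<in>S. f \<sigma> \<noteq> 0) \<longrightarrow> \<bar>l\<bar> \<le> 1 - \<epsilon>"
  proof (intro impI)
    assume l1: "l \<noteq> 1" and "\<exists>\<sigma>\<in>S. f \<sigma> \<noteq> 0"
    then obtain s0 where s0: "s0 \<in> S" "f s0 \<noteq> 0" by auto
    have "lip f \<noteq> 0"
    proof
      assume "lip f = 0"
      from const[OF this] have c: "\<forall>a\<in>S. f a = f s0" using s0(1) by blast
      have "Pf f s0 = (\<Sum>\<sigma>'\<in>S. Pk s0 \<sigma>' * f s0)" unfolding Pf_def using c by (intro sum.cong) auto
      also have "\<dots> = f s0" using Pk_sum[OF s0(1)] by (simp add: sum_distrib_right[symmetric])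
      finally have "l * f s0 = f s0" using ev[OF s0(1)] by simp
      thus False using l1 s0(2) by simp
    qed
    hence "lip f > 0" using lip0 by simp
    thus "\<bar>l\<bar> \<le> 1 - \<epsilon>" using key by (simp add: mult_le_cancel_right_pos)
  qed
  from i ii show ?thesis unfolding \<epsilon>_def by blast
qed

end


context potts
begin

lemma gap_locale:
  assumes Bne: "B \<noteq> {}"
  shows "(1-p)^(2*d*L^d) \<le> spectral_gap S (I_kernel d V q \<beta> B \<tau>)"
proof -
  define N where "N = card S"
  define e where "e = enum_states S"
  have ex: "\<exists>h. bij_betw h {0..<card S} S" by (rule ex_bij_betw_nat_finite[OF finS])
  have bij: "bij_betw e {0..<N} S" unfolding e_def enum_states_def N_def by (rule someI_ex[OF ex])
  have eS: "e i \<in> S" if "i < N" for i using bij that by (auto simp: bij_betw_def)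
  have N2: "N \<ge> 2"
  proof -
    have "card B \<ge> 1" using Bne finB by (simp add: Suc_le_eq card_gt_0_iff)
    hence "q ^ 1 \<le> q ^ card B" using q2 by (intro power_increasing) auto
    thus ?thesis unfolding N_def card_configs[OF finB] using q2 by simp
  qed
  have PkI: "Pk = I_kernel d V q \<beta> B \<tau>" by (intro ext) (simp add: Pk_def)
  define A where "A = kernel_mat S Pk"
  have A: "A \<in> carrier_mat N N" unfolding A_def kernel_mat_def N_def by simp
  have Aij: "A$$(i,j) = Pk (e i) (e j)" if "i < N" "j < N" for i j
    using that unfolding A_def kernel_mat_def N_def e_def by simp
  have reidx: "(\<Sum>k<N. g (e k)) = (\<Sum>\<sigma>\<in>S. g \<sigma>)" for g :: "config \<Rightarrow> real"
    unfolding lessThan_atLeast0 by (rule sum.reindex_bij_betw[OF bij])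
  define ei where "ei \<sigma> = inv_into {0..<N} e \<sigma>" for \<sigma>
  have ei1: "ei (e k) = k" if "k < N" for k unfolding ei_def using bij_betw_inv_into_left[OF bij] that by simp
  have ei2: "ei \<sigma> < N \<and> e (ei \<sigma>) = \<sigma>" if "\<sigma> \<in> S" for \<sigma>
  proof -
    have im: "\<sigma> \<in> e ` {0..<N}" using that bij unfolding bij_betw_def by auto
    have "inv_into {0..<N} e \<sigma> \<in> {0..<N}" by (rule inv_into_into[OF im])
    moreover have "e (inv_into {0..<N} e \<sigma>) = \<sigma>" by (rule f_inv_into_f[OF im])
    ultimately show ?thesis unfolding ei_def by simp
  qed
  have transf: "Pf (\<lambda>\<sigma>. g (ei \<sigma>)) \<sigma> = l * g (ei \<sigma>)" if ev: "\<And>i. i < N \<Longrightarrow> (\<Sum>k<N. A$$(i,k) * g k) = l * g i"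
    and s: "\<sigma> \<in> S" for g l \<sigma>
  proof -
    let ?i = "ei \<sigma>"
    have i: "?i < N" "e ?i = \<sigma>" using ei2[OF s] by auto
    have "Pf (\<lambda>\<sigma>. g (ei \<sigma>)) \<sigma> = (\<Sum>k<N. Pk \<sigma> (e k) * g (ei (e k)))"
      unfolding Pf_def by (rule reidx[symmetric])
    also have "\<dots> = (\<Sum>k<N. A$$(?i,k) * g k)" using i by (intro sum.cong refl) (simp add: Aij ei1)
    also have "\<dots> = l * g ?i" using ev[OF i(1)] .
    finally show ?thesis .
  qed
  have "(1-p)^(2*d*L^d) \<le> 1 - max \<bar>eigs_desc A ! 1\<bar> \<bar>last (eigs_desc A)\<bar>"
  proof (rule gap_abstract[OF A N2, where \<pi> = "\<lambda>i. piw (e i)"])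
    show "0 < (1-p)^(2*d*L^d)" using p01 by simp
    show "\<And>i k. i < N \<Longrightarrow> k < N \<Longrightarrow> 0 \<le> A$$(i,k)" by (simp add: Aij Pk_nonneg)
    show "(\<Sum>k<N. A$$(i,k)) = 1" if i: "i < N" for i
    proof -
      have "(\<Sum>k<N. A$$(i,k)) = (\<Sum>k<N. Pk (e i) (e k))" using i by (intro sum.cong refl) (simp add: Aij)
      also have "\<dots> = (\<Sum>\<sigma>\<in>S. Pk (e i) \<sigma>)" by (rule reidx)
      also have "\<dots> = 1" by (rule Pk_sum[OF eS[OF i]])
      finally show ?thesis .
    qed
    show "\<And>i. i < N \<Longrightarrow> 0 < piw (e i)" by (rule piw_pos)
    show "\<And>i j. i < N \<Longrightarrow> j < N \<Longrightarrow> piw (e i) * A$$(i,j) = piw (e j) * A$$(j,i)"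
      by (simp add: Aij reversible)
    fix g :: "nat \<Rightarrow> real"
    {
      assume ev: "\<And>i. i < N \<Longrightarrow> (\<Sum>k<N. A$$(i,k) * g k) = g i"
      have ev': "\<And>i. i < N \<Longrightarrow> (\<Sum>k<N. A$$(i,k) * g k) = 1 * g i" using ev by simp
      have "\<forall>a\<in>S. \<forall>b\<in>S. (\<lambda>\<sigma>. g (ei \<sigma>)) a = (\<lambda>\<sigma>. g (ei \<sigma>)) b"
        using eig_props[of "\<lambda>\<sigma>. g (ei \<sigma>)" 1] transf[OF ev'] by blast
      thus "\<forall>i<N. \<forall>j<N. g i = g j" using eS ei1 by metis
    }
    fix l :: real
    assume ev: "\<And>i. i < N \<Longrightarrow> (\<Sum>k<N. A$$(i,k) * g k) = l * g i" and l1: "l \<noteq> 1" and nz: "\<exists>i<N. g i \<noteq> 0"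
    from nz obtain i where i: "i < N" "g i \<noteq> 0" by auto
    have "\<exists>\<sigma>\<in>S. g (ei \<sigma>) \<noteq> 0" using i eS[OF i(1)] ei1[OF i(1)] by metis
    thus "\<bar>l\<bar> \<le> 1 - (1-p)^(2*d*L^d)"
      using eig_props[of "\<lambda>\<sigma>. g (ei \<sigma>)" l] transf[OF ev] l1 by blast
  qed
  thus ?thesis unfolding spectral_gap_def Let_def A_def PkI .
qed

end

lemma finite_cube: "finite (cube d c n)"
proof -
  have "cube d c n \<subseteq> (\<lambda>f i. if i < d then f i else 0) ` PiE {..<d} (\<lambda>i. {c i..<c i + int n})"
  proof
    fix y assume y: "y \<in> cube d c n"
    have "y = (\<lambda>i. if i < d then restrict y {..<d} i else 0)"
      using y unfolding cube_def by (auto simp: fun_eq_iff)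
    moreover have "restrict y {..<d} \<in> PiE {..<d} (\<lambda>i. {c i..<c i + int n})"
      using y unfolding cube_def by auto
    ultimately show "y \<in> (\<lambda>f i. if i < d then f i else 0) ` PiE {..<d} (\<lambda>i. {c i..<c i + int n})" by blast
  qed
  thus ?thesis by (rule finite_subset) (intro finite_imageI finite_PiE, auto)
qed

theorem mainTheorem11:
  fixes d n q L :: nat and c x :: vtx and \<beta> :: real and \<tau> :: config
  assumes "d \<ge> 1" and "n \<ge> 1" and "q \<ge> 2" and "\<beta> > 0" and "odd L"
    and "\<forall>i<d. 0 \<le> x i \<and> x i \<le> int L + 2"
    and "block d (cube d c n) L x \<noteq> {}"
    and "\<tau> \<in> configs (cube d c n - block d (cube d c n) L x) q"
  shows "spectral_gap (configs (block d (cube d c n) L x) q)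
           (I_kernel d (cube d c n) q \<beta> (block d (cube d c n) L x) \<tau>)
         \<ge> 1 / 7 * exp (- 2 * \<beta> * real d * real L ^ d)"
proof -
  interpret P: potts d "cube d c n" q \<beta> L x \<tau>
    by unfold_locales (use assms finite_cube in \<open>auto simp: cube_def\<close>)
  have g: "(1 - P.p)^(2*d*L^d) \<le> spectral_gap (configs (block d (cube d c n) L x) q)
           (I_kernel d (cube d c n) q \<beta> (block d (cube d c n) L x) \<tau>)"
    by (rule P.gap_locale) (use assms in auto)
  have "(1 - P.p)^(2*d*L^d) = exp (- \<beta>) ^ (2*d*L^d)" using P.p01 by simp
  also have "\<dots> = exp (real (2*d*L^d) * (- \<beta>))" by (rule exp_of_nat_mult[symmetric])
  also have "real (2*d*L^d) * (- \<beta>) = - 2 * \<beta> * real d * real L ^ d" by simp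
  finally have "(1 - P.p)^(2*d*L^d) = exp (- 2 * \<beta> * real d * real L ^ d)" .
  moreover have "1 / 7 * exp (- 2 * \<beta> * real d * real L ^ d) \<le> exp (- 2 * \<beta> * real d * real L ^ d)" by simp
  ultimately show ?thesis using g by linarith
qed


end
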